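(* In the Call-by-Value probabilistic $\lambda$-calculus (as defined in the context), $\Rrightarrow_E$ is asymptotically complete for $\Rightarrow$: for every multi-distribution $\mathbf m$, if $\mathbf m\Rightarrow^{\mathrm{obs}_{\mathrm{Nnf}}}\mathbf r$ then $\mathbf m\Rrightarrow_E^{\mathrm{obs}_{\mathrm{Nnf}}}\mathbf s$ for some $\mathbf s$ with $\mathbf r\le\mathbf s$.
   Context: Terms $\Lambda_\oplus$: $M::=x\mid\lambda x.M\mid MM\mid M\oplus M$; values $V::=x\mid\lambda x.M$. Contexts $C::=[\,]\mid MC\mid CM\mid\lambda x.C\mid C\oplus M\mid M\oplus C$; weak contexts $W::=[\,]\mid WM\mid MW$. A multi-distribution is a finite multiset $[p_iM_i]_{i\in I}$ with $p_i\in(0,1]$, $\sum_ip_i\le1$; $+$ is multiset union, $q\cdot[p_iM_i]_i=[(qp_i)M_i]_i$, $[M]:=[1M]$. $C[(\lambda x.M)V]\to_{\beta_v}[C[M\{V/x\}]]$; $W[M\oplus N]\to_\oplus[\tfrac12W[M],\tfrac12W[N]]$; $\to:=\to_{\beta_v}\cup\to_\oplus$; surface reduction $\to_s$ is $\to_\oplus$ together with the closure of $\beta_v$ under weak contexts. $M$ is $\to$-normal (surface-normal) if no $\mathbf m$ with $M\to\mathbf m$ ($M\to_s\mathbf m$); $\mathrm{Nnf}$ is the set of $\to$-normal terms. Lifting $\Rightarrow_r$ of $r$: least relation with $[M]\Rightarrow_r[M]$; $[M]\Rightarrow_r\mathbf m$ if $M\,r\,\mathbf m$; $[p_iM_i]_{i\in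 I}\Rightarrow_r\sum_ip_i\cdot\mathbf m_i$ if $[M_i]\Rightarrow_r\mathbf m_i$ for all $i$. Full lifting $\Rrightarrow_r$: same but the first rule $[M]\Rrightarrow_r[M]$ only when $M$ is $\to$-normal. $\Rightarrow$ is the lifting of $\to$. Let $\rightsquigarrow_U$ be the unbiased iteration of weak $\beta_v$-reduction on $\Lambda_\oplus$: if $M\to_wM'$ (closure of $\beta_v$ under weak contexts) then $M\rightsquigarrow_UM'$; if $M$ is $\to_w$-normal: $\lambda x.P\rightsquigarrow_U\lambda x.P'$, $PQ\rightsquigarrow_UP'Q$, $PQ\rightsquigarrow_UPQ'$, $P\oplus Q\rightsquigarrow_UP'\oplus Q$, $P\oplus Q\rightsquigarrow_UP\oplus Q'$ whenever $P\rightsquigarrow_UP'$, resp. $Q\rightsquigarrow_UQ'$. $\rightsquigarrow_E$: if $M$ is not surface-normal and $M\to_s\mathbf m$ then $M\rightsquigarrow_E\mathbf m$; if $M$ is surface-normal and $M\rightsquigarrow_UM'$ then $M\rightsquigarrow_E[M']$; $\Rrightarrow_E$ is its full lifting. $\mathrm{obs}_{\mathrm{Nnf}}([p_iM_i]_{i\in I})$ is the subdistribution $\mu$ on $\mathrm{Nnf}$ with $\mu(N)=\sum_{i:\,M_i=N}p_i$, subdistributions ordered pointwise. For a relation $R$ on multi-distributions, $\mathbf m\,R^{\mathrm{obs}_{\mathrm{Nnf}}}\,\mathbf r$ means there is a maximal $R$-sequence $(\mathbf m_n)_n$ from $\mathbf m$ (infinite, or finite ending in an $R$-normal element and then continued constantly)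 with $\sup_n\mathrm{obs}_{\mathrm{Nnf}}(\mathbf m_n)=\mathbf r$. *)

theory Defs
  imports Complex_Main "HOL-Library.Multiset"
begin

section \<open>Terms of the probabilistic lambda calculus (de Bruijn indices)\<close>

datatype trm = Var nat | Lam trm | App trm trm | Choice trm trm

fun is_value :: "trm \<Rightarrow> bool" where
  "is_value (Var x) = True"
| "is_value (Lam M) = True"
| "is_value (App M N) = False"
| "is_value (Choice M N) = False"

fun shift :: "nat \<Rightarrow> trm \<Rightarrow> trm" where
  "shift c (Var i) = (if i < c then Var i else Var (Suc i))"
| "shift c (Lam M) = Lam (shift (Suc c) M)"
| "shift c (App M N) = App (shift c M) (shift c N)"
| "shift c (Choice M N) = Choice (shift c M) (shift c N)"

text \<open>Capture-avoiding substitution of V for index k (the binder being removed).\<close>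
fun subst :: "trm \<Rightarrow> nat \<Rightarrow> trm \<Rightarrow> trm" where
  "subst (Var i) k V = (if i < k then Var i else if i = k then V else Var (i - 1))"
| "subst (Lam M) k V = Lam (subst M (Suc k) (shift 0 V))"
| "subst (App M N) k V = App (subst M k V) (subst N k V)"
| "subst (Choice M N) k V = Choice (subst M k V) (subst N k V)"

type_synonym mdist = "(real \<times> trm) multiset"

definition is_mdist :: "mdist \<Rightarrow> bool" where
  "is_mdist m \<longleftrightarrow> (\<forall>x \<in># m. 0 < fst x \<and> fst x \<le> 1) \<and> sum_mset (image_mset fst m) \<le> 1"

definition dirac :: "trm \<Rightarrow> mdist" where
  "dirac M = {#(1, M)#}"

definition scale :: "real \<Rightarrow> mdist \<Rightarrow> mdist" where
  "scale q m = image_mset (\<lambda>(p, M). (q * p, M)) m"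

definition map_trm :: "(trm \<Rightarrow> trm) \<Rightarrow> mdist \<Rightarrow> mdist" where
  "map_trm f m = image_mset (\<lambda>(p, M). (p, f M)) m"

inductive beta_full :: "trm \<Rightarrow> trm \<Rightarrow> bool" where
  root: "is_value V \<Longrightarrow> beta_full (App (Lam M) V) (subst M 0 V)"
| appL: "beta_full M M' \<Longrightarrow> beta_full (App M N) (App M' N)"
| appR: "beta_full N N' \<Longrightarrow> beta_full (App M N) (App M N')"
| lam: "beta_full M M' \<Longrightarrow> beta_full (Lam M) (Lam M')"
| choiceL: "beta_full M M' \<Longrightarrow> beta_full (Choice M N) (Choice M' N)"
| choiceR: "beta_full N N' \<Longrightarrow> beta_full (Choice M N) (Choice M N')"

inductive beta_weak :: "trm \<Rightarrow> trm \<Rightarrow> bool" where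
  root: "is_value V \<Longrightarrow> beta_weak (App (Lam M) V) (subst M 0 V)"
| appL: "beta_weak M M' \<Longrightarrow> beta_weak (App M N) (App M' N)"
| appR: "beta_weak N N' \<Longrightarrow> beta_weak (App M N) (App M N')"

inductive oplus_step :: "trm \<Rightarrow> mdist \<Rightarrow> bool" where
  root: "oplus_step (Choice M N) {#(1/2, M), (1/2, N)#}"
| appL: "oplus_step M m \<Longrightarrow> oplus_step (App M N) (map_trm (\<lambda>P. App P N) m)"
| appR: "oplus_step N m \<Longrightarrow> oplus_step (App M N) (map_trm (\<lambda>P. App M P) m)"

definition step :: "trm \<Rightarrow> mdist \<Rightarrow> bool" where
  "step M m \<longleftrightarrow> (\<exists>M'. beta_full M M' \<and> m = dirac M') \<or> oplus_step M m"

definition surface_step :: "trm \<Rightarrow> mdist \<Rightarrow> bool" where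
  "surface_step M m \<longleftrightarrow> (\<exists>M'. beta_weak M M' \<and> m = dirac M') \<or> oplus_step M m"

definition normal :: "trm \<Rightarrow> bool" where
  "normal M \<longleftrightarrow> \<not> (\<exists>m. step M m)"

definition surface_normal :: "trm \<Rightarrow> bool" where
  "surface_normal M \<longleftrightarrow> \<not> (\<exists>m. surface_step M m)"

definition weak_normal :: "trm \<Rightarrow> bool" where
  "weak_normal M \<longleftrightarrow> \<not> (\<exists>M'. beta_weak M M')"

inductive U_step :: "trm \<Rightarrow> trm \<Rightarrow> bool" where
  weak: "beta_weak M M' \<Longrightarrow> U_step M M'"
| lam: "weak_normal (Lam P) \<Longrightarrow> U_step P P' \<Longrightarrow> U_step (Lam P) (Lam P')"
| appL: "weak_normal (App P Q) \<Longrightarrow> U_step P P' \<Longrightarrow> U_step (App P Q) (App P' Q)"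
| appR: "weak_normal (App P Q) \<Longrightarrow> U_step Q Q' \<Longrightarrow> U_step (App P Q) (App P Q')"
| choiceL: "weak_normal (Choice P Q) \<Longrightarrow> U_step P P' \<Longrightarrow> U_step (Choice P Q) (Choice P' Q)"
| choiceR: "weak_normal (Choice P Q) \<Longrightarrow> U_step Q Q' \<Longrightarrow> U_step (Choice P Q) (Choice P Q')"

definition E_step :: "trm \<Rightarrow> mdist \<Rightarrow> bool" where
  "E_step M m \<longleftrightarrow>
     (\<not> surface_normal M \<and> surface_step M m) \<or>
     (surface_normal M \<and> (\<exists>M'. U_step M M' \<and> m = dirac M'))"

text \<open>Lifting of r (the relation \<open>\<Rightarrow>_r\<close>); the third rule is indexed by a list enumerating the multiset.\<close>
inductive lift :: "(trm \<Rightarrow> mdist \<Rightarrow> bool) \<Rightarrow> mdist \<Rightarrow> mdist \<Rightarrow> bool" for r where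
  refl: "lift r (dirac M) (dirac M)"
| step: "r M m \<Longrightarrow> lift r (dirac M) m"
| sum: "list_all2 (\<lambda>x n. lift r (dirac (snd x)) n) xs ns \<Longrightarrow>
        lift r (mset xs) (sum_list (map2 (\<lambda>x n. scale (fst x) n) xs ns))"

inductive full_lift :: "(trm \<Rightarrow> mdist \<Rightarrow> bool) \<Rightarrow> mdist \<Rightarrow> mdist \<Rightarrow> bool" for r where
  refl: "normal M \<Longrightarrow> full_lift r (dirac M) (dirac M)"
| step: "r M m \<Longrightarrow> full_lift r (dirac M) m"
| sum: "list_all2 (\<lambda>x n. full_lift r (dirac (snd x)) n) xs ns \<Longrightarrow>
        full_lift r (mset xs) (sum_list (map2 (\<lambda>x n. scale (fst x) n) xs ns))"

text \<open>Subdistribution on normal forms, as a function trm => real (zero off Nnf).\<close>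
definition obs_Nnf :: "mdist \<Rightarrow> trm \<Rightarrow> real" where
  "obs_Nnf m N = (if normal N then sum_mset (image_mset fst (filter_mset (\<lambda>x. snd x = N) m)) else 0)"

definition maximal_seq :: "(mdist \<Rightarrow> mdist \<Rightarrow> bool) \<Rightarrow> mdist \<Rightarrow> (nat \<Rightarrow> mdist) \<Rightarrow> bool" where
  "maximal_seq R m ms \<longleftrightarrow> ms 0 = m \<and>
     (\<forall>n. R (ms n) (ms (Suc n)) \<or> ((\<nexists>m'. R (ms n) m') \<and> ms (Suc n) = ms n))"

definition obs_rel :: "(mdist \<Rightarrow> mdist \<Rightarrow> bool) \<Rightarrow> mdist \<Rightarrow> (trm \<Rightarrow> real) \<Rightarrow> bool" where
  "obs_rel R m r \<longleftrightarrow> (\<exists>ms. maximal_seq R m ms \<and> r = (\<lambda>N. SUP n. obs_Nnf (ms n) N))"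

end

theory Submission
  imports Defs
begin



fun cnt :: "nat \<Rightarrow> trm \<Rightarrow> nat" where
  "cnt k (Var i) = (if i = k then 1 else 0)"
| "cnt k (Lam M) = cnt (Suc k) M"
| "cnt k (App M N) = cnt k M + cnt k N"
| "cnt k (Choice M N) = cnt k M + cnt k N"

lemma S1: "subst (shift k M) k V = M"
  by (induction M arbitrary: k V) auto

lemma S2: "j \<le> i \<Longrightarrow> shift j (shift i M) = shift (Suc i) (shift j M)"
  by (induction M arbitrary: i j) auto

lemma SA: "k \<le> j \<Longrightarrow> shift j (subst M k V) = subst (shift (Suc j) M) k (shift j V)"
proof (induction M arbitrary: k j V)
  case (Lam M)
  then show ?case using S2[of 0 j V] by auto
qed auto

lemma SB: "j \<le> k \<Longrightarrow> shift j (subst M k V) = subst (shift j M) (Suc k) (shift j V)"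
proof (induction M arbitrary: k j V)
  case (Lam M)
  then show ?case using S2[of 0 j V] by auto
qed auto

lemma S4: "i \<le> k \<Longrightarrow> subst (subst M i W) k V = subst (subst M (Suc k) (shift i V)) i (subst W k V)"
proof (induction M arbitrary: i k W V)
  case (Var x)
  then show ?case by (auto simp: S1)
next
  case (Lam M)
  then show ?case using S2[of 0 i V] SB[of 0 k W V] by auto
qed auto

lemma value_shift[simp]: "is_value (shift c V) = is_value V"
  by (cases V) auto

lemma value_subst: "is_value V \<Longrightarrow> is_value W \<Longrightarrow> is_value (subst V k W)"
  by (cases V) auto

lemma cnt_shift_lt: "i < j \<Longrightarrow> cnt i (shift j M) = cnt i M"
  by (induction M arbitrary: i j) auto

lemma cnt_shift_Suc: "c \<le> i \<Longrightarrow> cnt (Suc i) (shift c M) = cnt i M"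
  by (induction M arbitrary: i c) auto

lemma cnt_shift_same: "cnt c (shift c M) = 0"
  by (induction M arbitrary: c) auto

lemma CS1: "j \<le> k \<Longrightarrow> cnt j V = 0 \<Longrightarrow> cnt j (subst M (Suc k) V) = cnt j M"
proof (induction M arbitrary: j k V)
  case (Lam M)
  then show ?case using cnt_shift_Suc[of 0 j V] by auto
qed auto

lemma CS2: "i \<le> k \<Longrightarrow> cnt k (subst M i W) = cnt (Suc k) M + cnt i M * cnt k W"
proof (induction M arbitrary: i k W)
  case (Lam M)
  then show ?case using cnt_shift_Suc[of 0 k W] by auto
qed (auto simp: algebra_simps)

section \<open>Parallel reduction with sizes\<close>

inductive pn :: "nat \<Rightarrow> trm \<Rightarrow> trm \<Rightarrow> bool" where
  var: "pn n (Var i) (Var i)"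
| lam: "pn n P P' \<Longrightarrow> pn n (Lam P) (Lam P')"
| app: "pn a M M' \<Longrightarrow> pn b N N' \<Longrightarrow> a + b \<le> n \<Longrightarrow> pn n (App M N) (App M' N')"
| choice: "pn a M M' \<Longrightarrow> pn b N N' \<Longrightarrow> a + b \<le> n \<Longrightarrow> pn n (Choice M N) (Choice M' N')"
| beta: "pn a P P' \<Longrightarrow> pn b V V' \<Longrightarrow> is_value V \<Longrightarrow> a + cnt 0 P' * b + 1 \<le> n \<Longrightarrow>
     pn n (App (Lam P) V) (subst P' 0 V')"

definition pr :: "trm \<Rightarrow> trm \<Rightarrow> bool" where
  "pr M N \<longleftrightarrow> (\<exists>n. pn n M N)"

lemma pn_mono: "pn n M N \<Longrightarrow> n \<le> n' \<Longrightarrow> pn n' M N"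
proof (induction arbitrary: n' rule: pn.induct)
  case (app a M M' b N N' n)
  then show ?case by (intro pn.app[of a M M' b N N']) auto
next
  case (choice a M M' b N N' n)
  then show ?case by (intro pn.choice[of a M M' b N N']) auto
next
  case (beta a P P' b V V' n)
  then show ?case by (intro pn.beta[of a P P' b V V']) auto
qed (auto intro: pn.intros)

lemma pn_refl: "pn n M M"
proof (induction M arbitrary: n)
  case (App M1 M2)
  then show ?case using pn.app[of 0 M1 M1 0 M2 M2 n] by auto
next
  case (Choice M1 M2)
  then show ?case using pn.choice[of 0 M1 M1 0 M2 M2 n] by auto
qed (auto intro: pn.intros)

lemma pr_refl: "pr M M"
  unfolding pr_def using pn_refl by blast

lemma pn_value: "pn n V V' \<Longrightarrow> is_value V \<Longrightarrow> is_value V'"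
  by (induction rule: pn.induct) auto

lemma pn_shift: "pn n M N \<Longrightarrow> pn n (shift c M) (shift c N)"
proof (induction arbitrary: c rule: pn.induct)
  case (var n i)
  then show ?case by (auto intro: pn.intros)
next
  case (lam n P P')
  then show ?case by (auto intro: pn.intros)
next
  case (app a M M' b N N' n)
  then show ?case by (auto intro: pn.intros)
next
  case (choice a M M' b N N' n)
  then show ?case by (auto intro: pn.intros)
next
  case (beta a P P' b V V' n)
  have e: "shift c (subst P' 0 V') = subst (shift (Suc c) P') 0 (shift c V')"
    using SA[of 0 c P' V'] by simp
  have "cnt 0 (shift (Suc c) P') = cnt 0 P'" using cnt_shift_lt by simp
  then have "pn n (App (Lam (shift (Suc c) P)) (shift c V)) (subst (shift (Suc c) P') 0 (shift c V'))"
    using beta by (intro pn.beta) auto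
  then show ?case using e by simp
qed

lemma pn_subst:
  "pn n M M' \<Longrightarrow> pn m V V' \<Longrightarrow> is_value V \<Longrightarrow>
   pn (n + cnt k M' * m) (subst M k V) (subst M' k V')"
proof (induction arbitrary: k V V' m rule: pn.induct)
  case (var n i)
  then show ?case
    by (auto intro: pn.intros pn_mono)
next
  case (lam n P P')
  have "pn m (shift 0 V) (shift 0 V')" using lam pn_shift by blast
  then have "pn (n + cnt (Suc k) P' * m) (subst P (Suc k) (shift 0 V)) (subst P' (Suc k) (shift 0 V'))"
    using lam by auto
  then show ?case by (auto intro: pn.intros)
next
  case (app a M M' b N N' n)
  have 1: "pn (a + cnt k M' * m) (subst M k V) (subst M' k V')" using app by blast
  have 2: "pn (b + cnt k N' * m) (subst N k V) (subst N' k V')" using app by blast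
  have "a + cnt k M' * m + (b + cnt k N' * m) \<le> n + cnt k (App M' N') * m" using app.hyps(3) by (simp add: algebra_simps)
  then show ?case using pn.app[OF 1 2] by simp
next
  case (choice a M M' b N N' n)
  have 1: "pn (a + cnt k M' * m) (subst M k V) (subst M' k V')" using choice by blast
  have 2: "pn (b + cnt k N' * m) (subst N k V) (subst N' k V')" using choice by blast
  have "a + cnt k M' * m + (b + cnt k N' * m) \<le> n + cnt k (Choice M' N') * m" using choice.hyps(3) by (simp add: algebra_simps)
  then show ?case using pn.choice[OF 1 2] by simp
next
  case (beta a P P' b W W' n)
  have sV: "pn m (shift 0 V) (shift 0 V')" using beta pn_shift by blast
  have 1: "pn (a + cnt (Suc k) P' * m) (subst P (Suc k) (shift 0 V)) (subst P' (Suc k) (shift 0 V'))"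
    using beta.IH(1)[OF sV] beta by simp
  have 2: "pn (b + cnt k W' * m) (subst W k V) (subst W' k V')"
    using beta by blast
  have vW: "is_value (subst W k V)" using beta value_subst by blast
  have c0: "cnt 0 (subst P' (Suc k) (shift 0 V')) = cnt 0 P'"
    using CS1[of 0 k "shift 0 V'" P'] cnt_shift_same[of 0 V'] by simp
  have c1: "cnt k (subst P' 0 W') = cnt (Suc k) P' + cnt 0 P' * cnt k W'"
    using CS2[of 0 k P' W'] by simp
  have le: "(a + cnt (Suc k) P' * m) + cnt 0 (subst P' (Suc k) (shift 0 V')) * (b + cnt k W' * m) + 1
      \<le> n + cnt k (subst P' 0 W') * m"
    using beta.hyps(4) unfolding c0 c1 by (simp add: algebra_simps)
  have "pn (n + cnt k (subst P' 0 W') * m)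
     (App (Lam (subst P (Suc k) (shift 0 V))) (subst W k V))
     (subst (subst P' (Suc k) (shift 0 V')) 0 (subst W' k V'))"
    by (rule pn.beta[OF 1 2 vW le])
  moreover have "subst (subst P' 0 W') k V' = subst (subst P' (Suc k) (shift 0 V')) 0 (subst W' k V')"
    using S4[of 0 k P' W' V'] by simp
  ultimately show ?case by simp
qed




inductive ipar :: "trm \<Rightarrow> trm \<Rightarrow> bool" where
  var: "ipar (Var i) (Var i)"
| lam: "pr P P' \<Longrightarrow> ipar (Lam P) (Lam P')"
| app: "ipar M M' \<Longrightarrow> ipar N N' \<Longrightarrow> ipar (App M N) (App M' N')"
| choice: "pr A A' \<Longrightarrow> pr B B' \<Longrightarrow> ipar (Choice A B) (Choice A' B')"

lemma ipar_pr: "ipar M N \<Longrightarrow> pr M N"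
proof (induction rule: ipar.induct)
  case (var i)
  then show ?case by (simp add: pr_refl)
next
  case (lam P P')
  then show ?case unfolding pr_def by (auto intro: pn.intros)
next
  case (app M M' N N')
  then obtain a b where "pn a M M'" "pn b N N'" unfolding pr_def by blast
  then show ?case unfolding pr_def by (auto intro: pn.app)
next
  case (choice A A' B B')
  then obtain a b where "pn a A A'" "pn b B B'" unfolding pr_def by blast
  then show ?case unfolding pr_def by (auto intro: pn.choice)
qed

lemma bw_appL: "beta_weak\<^sup>*\<^sup>* M M' \<Longrightarrow> beta_weak\<^sup>*\<^sup>* (App M N) (App M' N)"
  by (induction rule: rtranclp_induct) (auto intro: rtranclp.rtrancl_into_rtrancl beta_weak.appL)

lemma bw_appR: "beta_weak\<^sup>*\<^sup>* N N' \<Longrightarrow> beta_weak\<^sup>*\<^sup>* (App M N) (App M N')"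
  by (induction rule: rtranclp_induct) (auto intro: rtranclp.rtrancl_into_rtrancl beta_weak.appR)

lemma fact_aux:
  assumes IH: "\<And>k M N. k < n \<Longrightarrow> pn k M N \<Longrightarrow> \<exists>M1. beta_weak\<^sup>*\<^sup>* M M1 \<and> ipar M1 N"
  shows "pn n0 M N \<Longrightarrow> n0 \<le> n \<Longrightarrow> \<exists>M1. beta_weak\<^sup>*\<^sup>* M M1 \<and> ipar M1 N"
proof (induction rule: pn.induct)
  case (var n i)
  then show ?case by (auto intro: ipar.intros)
next
  case (lam n P P')
  have "ipar (Lam P) (Lam P')" using lam.hyps by (intro ipar.lam) (auto simp: pr_def)
  then show ?case by blast
next
  case (app a M M' b N N' n0)
  then obtain M1 N1 where "beta_weak\<^sup>*\<^sup>* M M1" "ipar M1 M'" "beta_weak\<^sup>*\<^sup>* N N1" "ipar N1 N'" by auto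
  then show ?case
    by (intro exI[of _ "App M1 N1"]) (meson bw_appL bw_appR rtranclp_trans ipar.app)
next
  case (choice a M M' b N N' n0)
  have "ipar (Choice M N) (Choice M' N')" using choice.hyps by (intro ipar.choice) (auto simp: pr_def)
  then show ?case by blast
next
  case (beta a P P' b V V' n0)
  have s: "pn (a + cnt 0 P' * b) (subst P 0 V) (subst P' 0 V')"
    using pn_subst[OF beta.hyps(1) beta.hyps(2) beta.hyps(3)] by simp
  have "a + cnt 0 P' * b < n" using beta by simp
  from IH[OF this s] obtain M1 where "beta_weak\<^sup>*\<^sup>* (subst P 0 V) M1" "ipar M1 (subst P' 0 V')" by blast
  moreover have "beta_weak (App (Lam P) V) (subst P 0 V)" using beta.hyps(3) by (rule beta_weak.root)
  ultimately show ?case by (meson converse_rtranclp_into_rtranclp)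
qed

lemma fact_pn: "pn n M N \<Longrightarrow> \<exists>M1. beta_weak\<^sup>*\<^sup>* M M1 \<and> ipar M1 N"
proof (induction n arbitrary: M N rule: less_induct)
  case (less n)
  then show ?case using fact_aux[of n n M N] by blast
qed

lemma fact: "pr M N \<Longrightarrow> \<exists>M1. beta_weak\<^sup>*\<^sup>* M M1 \<and> ipar M1 N"
  unfolding pr_def using fact_pn by blast

lemma ipar_Var: "ipar M (Var i) \<longleftrightarrow> M = Var i"
  by (auto elim: ipar.cases intro: ipar.intros)

lemma ipar_LamE: "ipar M (Lam P') \<Longrightarrow> (\<And>P. M = Lam P \<Longrightarrow> pr P P' \<Longrightarrow> thesis) \<Longrightarrow> thesis"
  by (auto elim: ipar.cases)

lemma ipar_AppE: "ipar M (App P' Q') \<Longrightarrow> (\<And>P Q. M = App P Q \<Longrightarrow> ipar P P' \<Longrightarrow> ipar Q Q' \<Longrightarrow> thesis) \<Longrightarrow> thesis"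
  by (auto elim: ipar.cases)

lemma ipar_ChoiceE: "ipar M (Choice P' Q') \<Longrightarrow> (\<And>P Q. M = Choice P Q \<Longrightarrow> pr P P' \<Longrightarrow> pr Q Q' \<Longrightarrow> thesis) \<Longrightarrow> thesis"
  by (auto elim: ipar.cases)

lemma ipar_value: "ipar M N \<Longrightarrow> is_value N \<Longrightarrow> is_value M"
  by (cases N) (auto elim: ipar.cases)

lemma ipar_value2: "ipar M N \<Longrightarrow> is_value M \<Longrightarrow> is_value N"
  by (cases M) (auto elim: ipar.cases)

lemma ipar_isLam: "ipar M N \<Longrightarrow> (\<exists>P. M = Lam P) \<longleftrightarrow> (\<exists>P. N = Lam P)"
  by (auto elim: ipar.cases)

lemma post_w: "beta_weak N N2 \<Longrightarrow> ipar M N \<Longrightarrow> \<exists>M3. beta_weak M M3 \<and> pr M3 N2"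
proof (induction arbitrary: M rule: beta_weak.induct)
  case (root V' P')
  from root(2) obtain X Y where M: "M = App X Y" "ipar X (Lam P')" "ipar Y V'" by (auto elim: ipar_AppE)
  from M(2) obtain P where X: "X = Lam P" "pr P P'" by (auto elim: ipar_LamE)
  have vY: "is_value Y" using ipar_value M(3) root(1) by blast
  obtain a where a: "pn a P P'" using X unfolding pr_def by blast
  obtain b where b: "pn b Y V'" using ipar_pr[OF M(3)] unfolding pr_def by blast
  have "pr (subst P 0 Y) (subst P' 0 V')" unfolding pr_def using pn_subst[OF a b vY] by blast
  moreover have "beta_weak M (subst P 0 Y)" using M X vY by (auto intro: beta_weak.root)
  ultimately show ?case by blast
next
  case (appL N0 N0' Q')
  from appL(3) obtain P Q where M: "M = App P Q" "ipar P N0" "ipar Q Q'" by (auto elim: ipar_AppE)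
  from appL(2)[OF M(2)] obtain P3 where "beta_weak P P3" "pr P3 N0'" by blast
  moreover obtain a b where "pn a P3 N0'" "pn b Q Q'" using calculation ipar_pr[OF M(3)] unfolding pr_def by blast
  ultimately show ?case using M unfolding pr_def by (auto intro: beta_weak.appL pn.app)
next
  case (appR N0 N0' P')
  from appR(3) obtain P Q where M: "M = App P Q" "ipar P P'" "ipar Q N0" by (auto elim: ipar_AppE)
  from appR(2)[OF M(3)] obtain Q3 where "beta_weak Q Q3" "pr Q3 N0'" by blast
  moreover obtain a b where "pn a P P'" "pn b Q3 N0'" using calculation ipar_pr[OF M(2)] unfolding pr_def by blast
  ultimately show ?case using M unfolding pr_def by (auto intro: beta_weak.appR pn.app)
qed

lemma ipar_reflect_bw: "beta_weak M X \<Longrightarrow> ipar M N \<Longrightarrow> \<exists>Y. beta_weak N Y"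
proof (induction arbitrary: N rule: beta_weak.induct)
  case (root V M)
  then obtain A B where N: "N = App A B" "ipar (Lam M) A" "ipar V B" by (auto elim: ipar.cases)
  then obtain M' where "A = Lam M'" by (auto elim: ipar.cases)
  moreover have "is_value B" using ipar_value2 N root by blast
  ultimately show ?case using N by (auto intro: beta_weak.root)
next
  case (appL M M' N0)
  then obtain A B where N: "N = App A B" "ipar M A" by (auto elim: ipar.cases)
  then show ?case using appL by (auto intro: beta_weak.appL)
next
  case (appR N0 N' M)
  then obtain A B where N: "N = App A B" "ipar N0 B" by (auto elim: ipar.cases)
  then show ?case using appR by (auto intro: beta_weak.appR)
qed

lemma ipar_reflect_ox: "oplus_step M X \<Longrightarrow> ipar M N \<Longrightarrow> \<exists>Y. oplus_step N Y"
proof (induction arbitrary: N rule: oplus_step.induct)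
  case (root M N0)
  then obtain A B where "N = Choice A B" by (auto elim: ipar.cases)
  then show ?case by (auto intro: oplus_step.root)
next
  case (appL M m N0)
  then obtain A B where N: "N = App A B" "ipar M A" by (auto elim: ipar.cases)
  then show ?case using appL by (auto intro: oplus_step.appL)
next
  case (appR N0 m M)
  then obtain A B where N: "N = App A B" "ipar N0 B" by (auto elim: ipar.cases)
  then show ?case using appR by (auto intro: oplus_step.appR)
qed

lemma ipar_wn: "ipar M N \<Longrightarrow> weak_normal N \<Longrightarrow> weak_normal M"
  unfolding weak_normal_def using ipar_reflect_bw by blast

lemma ipar_sn: "ipar M N \<Longrightarrow> surface_normal N \<Longrightarrow> surface_normal M"
  unfolding surface_normal_def surface_step_def using ipar_reflect_bw ipar_reflect_ox by blast




lemma pr_app: "pr M M' \<Longrightarrow> pr N N' \<Longrightarrow> pr (App M N) (App M' N')"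
  unfolding pr_def by (auto intro: pn.app)
lemma pr_lam: "pr M M' \<Longrightarrow> pr (Lam M) (Lam M')"
  unfolding pr_def by (auto intro: pn.lam)
lemma pr_choice: "pr M M' \<Longrightarrow> pr N N' \<Longrightarrow> pr (Choice M N) (Choice M' N')"
  unfolding pr_def by (auto intro: pn.choice)

definition isLam :: "trm \<Rightarrow> bool" where "isLam M \<longleftrightarrow> (\<exists>P. M = Lam P)"

lemma wn_Var[simp]: "weak_normal (Var i)"
  unfolding weak_normal_def by (auto elim: beta_weak.cases)
lemma wn_Lam[simp]: "weak_normal (Lam P)"
  unfolding weak_normal_def by (auto elim: beta_weak.cases)
lemma wn_Choice[simp]: "weak_normal (Choice P Q)"
  unfolding weak_normal_def by (auto elim: beta_weak.cases)
lemma wn_App: "weak_normal (App P Q) \<longleftrightarrow> weak_normal P \<and> weak_normal Q \<and> \<not> (isLam P \<and> is_value Q)"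
  unfolding weak_normal_def isLam_def
  by (auto elim: beta_weak.cases intro: beta_weak.intros)

lemma U_pres: "U_step P P2 \<Longrightarrow> weak_normal P \<Longrightarrow>
   weak_normal P2 \<and> (is_value P2 \<longleftrightarrow> is_value P) \<and> (isLam P2 \<longleftrightarrow> isLam P)"
proof (induction rule: U_step.induct)
  case (weak M M')
  then show ?case unfolding weak_normal_def by blast
next
  case (lam P P')
  then show ?case by (simp add: isLam_def)
next
  case (appL P Q P')
  then show ?case by (auto simp: wn_App isLam_def)
next
  case (appR P Q Q')
  then show ?case by (auto simp: wn_App isLam_def)
next
  case (choiceL P Q P')
  then show ?case by (simp add: isLam_def)
next
  case (choiceR P Q Q')
  then show ?case by (simp add: isLam_def)
qed

lemma U_appL_star: "U_step\<^sup>*\<^sup>* P P' \<Longrightarrow> weak_normal (App P Q) \<Longrightarrow>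
   U_step\<^sup>*\<^sup>* (App P Q) (App P' Q) \<and> weak_normal (App P' Q)"
proof (induction rule: rtranclp_induct)
  case base
  then show ?case by simp
next
  case (step y z)
  then have wy: "weak_normal (App y Q)" and r: "U_step\<^sup>*\<^sup>* (App P Q) (App y Q)" by auto
  have "weak_normal y" using wy by (simp add: wn_App)
  from U_pres[OF step(2) this] have "weak_normal (App z Q)" using wy by (auto simp: wn_App)
  moreover have "U_step (App y Q) (App z Q)" using wy step(2) by (rule U_step.appL)
  ultimately show ?case using r by auto
qed

lemma U_appR_star: "U_step\<^sup>*\<^sup>* Q Q' \<Longrightarrow> weak_normal (App P Q) \<Longrightarrow>
   U_step\<^sup>*\<^sup>* (App P Q) (App P Q') \<and> weak_normal (App P Q')"
proof (induction rule: rtranclp_induct)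
  case base
  then show ?case by simp
next
  case (step y z)
  then have wy: "weak_normal (App P y)" and r: "U_step\<^sup>*\<^sup>* (App P Q) (App P y)" by auto
  have "weak_normal y" using wy by (simp add: wn_App)
  from U_pres[OF step(2) this] have "weak_normal (App P z)" using wy by (auto simp: wn_App)
  moreover have "U_step (App P y) (App P z)" using wy step(2) by (rule U_step.appR)
  ultimately show ?case using r by auto
qed

lemma U_lam_star: "U_step\<^sup>*\<^sup>* P P' \<Longrightarrow> U_step\<^sup>*\<^sup>* (Lam P) (Lam P')"
  by (induction rule: rtranclp_induct) (auto intro: rtranclp.rtrancl_into_rtrancl U_step.lam[OF wn_Lam])

lemma U_choiceL_star: "U_step\<^sup>*\<^sup>* P P' \<Longrightarrow> U_step\<^sup>*\<^sup>* (Choice P Q) (Choice P' Q)"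
  by (induction rule: rtranclp_induct) (auto intro: rtranclp.rtrancl_into_rtrancl U_step.choiceL[OF wn_Choice])

lemma U_choiceR_star: "U_step\<^sup>*\<^sup>* Q Q' \<Longrightarrow> U_step\<^sup>*\<^sup>* (Choice P Q) (Choice P Q')"
  by (induction rule: rtranclp_induct) (auto intro: rtranclp.rtrancl_into_rtrancl U_step.choiceR[OF wn_Choice])

lemma bw_U_star: "beta_weak\<^sup>*\<^sup>* M M' \<Longrightarrow> U_step\<^sup>*\<^sup>* M M'"
  by (induction rule: rtranclp_induct) (auto intro: rtranclp.rtrancl_into_rtrancl U_step.weak)

lemma UU: "U_step M'' M3'' \<Longrightarrow> pr M M'' \<Longrightarrow> \<exists>M3. U_step\<^sup>*\<^sup>* M M3 \<and> pr M3 M3''"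
proof (induction arbitrary: M rule: U_step.induct)
  case (weak N N')
  from fact[OF weak(2)] obtain M1 where 1: "beta_weak\<^sup>*\<^sup>* M M1" "ipar M1 N" by blast
  from post_w[OF weak(1) 1(2)] obtain M3 where "beta_weak M1 M3" "pr M3 N'" by blast
  then show ?case using 1 by (meson bw_U_star rtranclp.rtrancl_into_rtrancl U_step.weak)
next
  case (lam P P')
  from fact[OF lam(4)] obtain M1 where 1: "beta_weak\<^sup>*\<^sup>* M M1" "ipar M1 (Lam P)" by blast
  from 1(2) obtain P1 where P1: "M1 = Lam P1" "pr P1 P" by (auto elim: ipar_LamE)
  from lam(3)[OF P1(2)] obtain P3 where "U_step\<^sup>*\<^sup>* P1 P3" "pr P3 P'" by blast
  then show ?case using 1 P1
    by (meson bw_U_star U_lam_star pr_lam rtranclp_trans)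
next
  case (appL P Q P')
  from fact[OF appL(4)] obtain M1 where 1: "beta_weak\<^sup>*\<^sup>* M M1" "ipar M1 (App P Q)" by blast
  from 1(2) obtain P1 Q1 where P1: "M1 = App P1 Q1" "ipar P1 P" "ipar Q1 Q" by (auto elim: ipar_AppE)
  have wn: "weak_normal (App P1 Q1)" using ipar_wn[OF 1(2) appL(1)] P1 by simp
  from appL(3)[OF ipar_pr[OF P1(2)]] obtain P3 where 3: "U_step\<^sup>*\<^sup>* P1 P3" "pr P3 P'" by blast
  have "U_step\<^sup>*\<^sup>* (App P1 Q1) (App P3 Q1)" using U_appL_star[OF 3(1) wn] by simp
  moreover have "pr (App P3 Q1) (App P' Q)" using 3(2) ipar_pr[OF P1(3)] by (rule pr_app)
  ultimately show ?case using 1 P1 by (meson bw_U_star rtranclp_trans)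
next
  case (appR P Q Q')
  from fact[OF appR(4)] obtain M1 where 1: "beta_weak\<^sup>*\<^sup>* M M1" "ipar M1 (App P Q)" by blast
  from 1(2) obtain P1 Q1 where P1: "M1 = App P1 Q1" "ipar P1 P" "ipar Q1 Q" by (auto elim: ipar_AppE)
  have wn: "weak_normal (App P1 Q1)" using ipar_wn[OF 1(2) appR(1)] P1 by simp
  from appR(3)[OF ipar_pr[OF P1(3)]] obtain Q3 where 3: "U_step\<^sup>*\<^sup>* Q1 Q3" "pr Q3 Q'" by blast
  have "U_step\<^sup>*\<^sup>* (App P1 Q1) (App P1 Q3)" using U_appR_star[OF 3(1) wn] by simp
  moreover have "pr (App P1 Q3) (App P Q')" using ipar_pr[OF P1(2)] 3(2) by (rule pr_app)
  ultimately show ?case using 1 P1 by (meson bw_U_star rtranclp_trans)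
next
  case (choiceL P Q P')
  from fact[OF choiceL(4)] obtain M1 where 1: "beta_weak\<^sup>*\<^sup>* M M1" "ipar M1 (Choice P Q)" by blast
  from 1(2) obtain P1 Q1 where P1: "M1 = Choice P1 Q1" "pr P1 P" "pr Q1 Q" by (auto elim: ipar_ChoiceE)
  from choiceL(3)[OF P1(2)] obtain P3 where 3: "U_step\<^sup>*\<^sup>* P1 P3" "pr P3 P'" by blast
  have "U_step\<^sup>*\<^sup>* (Choice P1 Q1) (Choice P3 Q1)" using U_choiceL_star[OF 3(1)] by simp
  moreover have "pr (Choice P3 Q1) (Choice P' Q)" using 3(2) P1(3) by (rule pr_choice)
  ultimately show ?case using 1 P1 by (meson bw_U_star rtranclp_trans)
next
  case (choiceR P Q Q')
  from fact[OF choiceR(4)] obtain M1 where 1: "beta_weak\<^sup>*\<^sup>* M M1" "ipar M1 (Choice P Q)" by blast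
  from 1(2) obtain P1 Q1 where P1: "M1 = Choice P1 Q1" "pr P1 P" "pr Q1 Q" by (auto elim: ipar_ChoiceE)
  from choiceR(3)[OF P1(3)] obtain Q3 where 3: "U_step\<^sup>*\<^sup>* Q1 Q3" "pr Q3 Q'" by blast
  have "U_step\<^sup>*\<^sup>* (Choice P1 Q1) (Choice P1 Q3)" using U_choiceR_star[OF 3(1)] by simp
  moreover have "pr (Choice P1 Q3) (Choice P Q')" using P1(2) 3(2) by (rule pr_choice)
  ultimately show ?case using 1 P1 by (meson bw_U_star rtranclp_trans)
qed

definition bnormal :: "trm \<Rightarrow> bool" where
  "bnormal M \<longleftrightarrow> \<not> (\<exists>M'. beta_full M M')"

lemma bnormal_App: "bnormal (App P Q) \<Longrightarrow> bnormal P \<and> bnormal Q"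
  unfolding bnormal_def by (auto intro: beta_full.intros)
lemma bnormal_Lam: "bnormal (Lam P) \<Longrightarrow> bnormal P"
  unfolding bnormal_def by (auto intro: beta_full.intros)
lemma bnormal_Choice: "bnormal (Choice P Q) \<Longrightarrow> bnormal P \<and> bnormal Q"
  unfolding bnormal_def by (auto intro: beta_full.intros)

lemma bw_full: "beta_weak M M' \<Longrightarrow> beta_full M M'"
  by (induction rule: beta_weak.induct) (auto intro: beta_full.intros)

lemma U_full: "U_step M M' \<Longrightarrow> beta_full M M'"
  by (induction rule: U_step.induct) (auto intro: beta_full.intros bw_full)

lemma bnormal_wn: "bnormal M \<Longrightarrow> weak_normal M"
  unfolding bnormal_def weak_normal_def using bw_full by blast

lemma norm: "bnormal N \<Longrightarrow> pr M N \<Longrightarrow> \<exists>M1. beta_weak\<^sup>*\<^sup>* M M1 \<and> ipar M1 N \<and> U_step\<^sup>*\<^sup>* M1 N"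
proof (induction N arbitrary: M)
  case (Var x)
  from fact[OF Var(2)] show ?case by (auto simp: ipar_Var)
next
  case (Lam P)
  from fact[OF Lam(3)] obtain M1 where 1: "beta_weak\<^sup>*\<^sup>* M M1" "ipar M1 (Lam P)" by blast
  from 1(2) obtain P1 where P1: "M1 = Lam P1" "pr P1 P" by (auto elim: ipar_LamE)
  from Lam(1)[OF bnormal_Lam[OF Lam(2)] P1(2)] obtain P2 where
    "beta_weak\<^sup>*\<^sup>* P1 P2" "U_step\<^sup>*\<^sup>* P2 P" by blast
  then have "U_step\<^sup>*\<^sup>* P1 P" by (meson bw_U_star rtranclp_trans)
  then show ?case using 1 P1 U_lam_star by blast
next
  case (App P Q)
  from fact[OF App(4)] obtain M1 where 1: "beta_weak\<^sup>*\<^sup>* M M1" "ipar M1 (App P Q)" by blast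
  from 1(2) obtain P1 Q1 where P1: "M1 = App P1 Q1" "ipar P1 P" "ipar Q1 Q" by (auto elim: ipar_AppE)
  have wn: "weak_normal (App P1 Q1)" using ipar_wn[OF 1(2) bnormal_wn[OF App(3)]] P1 by simp
  from App(1)[OF _ ipar_pr[OF P1(2)]] bnormal_App[OF App(3)] obtain P2 where
    "beta_weak\<^sup>*\<^sup>* P1 P2" "U_step\<^sup>*\<^sup>* P2 P" by blast
  then have a: "U_step\<^sup>*\<^sup>* P1 P" by (meson bw_U_star rtranclp_trans)
  from App(2)[OF _ ipar_pr[OF P1(3)]] bnormal_App[OF App(3)] obtain Q2 where
    "beta_weak\<^sup>*\<^sup>* Q1 Q2" "U_step\<^sup>*\<^sup>* Q2 Q" by blast
  then have b: "U_step\<^sup>*\<^sup>* Q1 Q" by (meson bw_U_star rtranclp_trans)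
  from U_appL_star[OF a wn] have c: "U_step\<^sup>*\<^sup>* (App P1 Q1) (App P Q1)" "weak_normal (App P Q1)" by auto
  from U_appR_star[OF b c(2)] have "U_step\<^sup>*\<^sup>* (App P Q1) (App P Q)" by simp
  then show ?case using 1 P1 c by (meson rtranclp_trans)
next
  case (Choice P Q)
  from fact[OF Choice(4)] obtain M1 where 1: "beta_weak\<^sup>*\<^sup>* M M1" "ipar M1 (Choice P Q)" by blast
  from 1(2) obtain P1 Q1 where P1: "M1 = Choice P1 Q1" "pr P1 P" "pr Q1 Q" by (auto elim: ipar_ChoiceE)
  from Choice(1)[OF _ P1(2)] bnormal_Choice[OF Choice(3)] obtain P2 where
    "beta_weak\<^sup>*\<^sup>* P1 P2" "U_step\<^sup>*\<^sup>* P2 P" by blast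
  then have a: "U_step\<^sup>*\<^sup>* P1 P" by (meson bw_U_star rtranclp_trans)
  from Choice(2)[OF _ P1(3)] bnormal_Choice[OF Choice(3)] obtain Q2 where
    "beta_weak\<^sup>*\<^sup>* Q1 Q2" "U_step\<^sup>*\<^sup>* Q2 Q" by blast
  then have b: "U_step\<^sup>*\<^sup>* Q1 Q" by (meson bw_U_star rtranclp_trans)
  have "U_step\<^sup>*\<^sup>* (Choice P1 Q1) (Choice P Q)"
    using U_choiceL_star[OF a] U_choiceR_star[OF b] by (meson rtranclp_trans)
  then show ?case using 1 P1 by blast
qed

lemma pn_bnormal_id: "pn n M N \<Longrightarrow> bnormal M \<Longrightarrow> N = M"
proof (induction rule: pn.induct)
  case (beta a P P' b V V' n)
  then show ?case unfolding bnormal_def by (auto intro: beta_full.root)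
qed (auto dest: bnormal_App bnormal_Lam bnormal_Choice)

lemma pr_bnormal_id: "pr M N \<Longrightarrow> bnormal M \<Longrightarrow> N = M"
  unfolding pr_def using pn_bnormal_id by blast




lemma scale_add[simp]: "scale p (a + b) = scale p a + scale p b"
  unfolding scale_def by simp
lemma scale_empty[simp]: "scale p {#} = {#}"
  unfolding scale_def by simp
lemma scale_scale[simp]: "scale p (scale q a) = scale (p * q) a"
  unfolding scale_def by (induction a) (auto simp: case_prod_beta)
lemma scale_one[simp]: "scale 1 a = a"
  unfolding scale_def by (induction a) (auto simp: case_prod_beta)
lemma scale_dirac[simp]: "scale p (dirac M) = {#(p, M)#}"
  unfolding scale_def dirac_def by simp
lemma scale_single[simp]: "scale p {#x#} = {#(p * fst x, snd x)#}"
  unfolding scale_def by (simp add: case_prod_beta)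
lemma scale_sum: "scale p (\<Sum>i\<in>#X. f i) = (\<Sum>i\<in>#X. scale p (f i))"
  by (induction X) auto

lemma map_trm_add[simp]: "map_trm f (a + b) = map_trm f a + map_trm f b"
  unfolding map_trm_def by simp
lemma map_trm_empty[simp]: "map_trm f {#} = {#}"
  unfolding map_trm_def by simp
lemma map_trm_dirac[simp]: "map_trm f (dirac M) = dirac (f M)"
  unfolding map_trm_def dirac_def by simp
lemma map_trm_scale[simp]: "map_trm f (scale p a) = scale p (map_trm f a)"
  unfolding map_trm_def scale_def by (induction a) (auto simp: case_prod_beta)
lemma map_trm_sum: "map_trm g (\<Sum>i\<in>#X. f i) = (\<Sum>i\<in>#X. map_trm g (f i))"
  by (induction X) auto
lemma map_trm_single[simp]: "map_trm f {#x#} = {#(fst x, f (snd x))#}"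
  unfolding map_trm_def by (simp add: case_prod_beta)

lemma decomp: "m = (\<Sum>x\<in>#m. scale (fst x) (dirac (snd x)))"
  by (induction m) auto

lemma sum_mset_swap:
  "(\<Sum>x\<in>#A. \<Sum>y\<in>#B. F x y) = (\<Sum>y\<in>#B. \<Sum>x\<in>#A. F x y)" for F :: "_ \<Rightarrow> _ \<Rightarrow> 'c::comm_monoid_add"
proof (induction A)
  case empty
  then show ?case by (induction B) auto
next
  case (add a A)
  then show ?case by (simp add: sum_mset.distrib)
qed

lemma mset_choice: "(\<forall>x\<in>#A. \<exists>y. P x y) \<Longrightarrow> \<exists>B. image_mset fst B = A \<and> (\<forall>z\<in>#B. P (fst z) (snd z))"
proof (induction A)
  case empty
  then show ?case by (intro exI[of _ "{#}"]) auto
next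
  case (add a A)
  then obtain B where B: "image_mset fst B = A" "\<forall>z\<in>#B. P (fst z) (snd z)" by auto
  from add obtain y where "P a y" by auto
  then show ?case using B by (intro exI[of _ "add_mset (a, y) B"]) auto
qed

lemma mset_match: "image_mset f A = image_mset g B \<Longrightarrow>
  \<exists>C. image_mset fst C = A \<and> image_mset snd C = B \<and> (\<forall>z\<in>#C. f (fst z) = g (snd z))"
proof (induction A arbitrary: B)
  case empty
  then show ?case by (intro exI[of _ "{#}"]) auto
next
  case (add a A)
  have "f a \<in># image_mset g B" using add(2)[symmetric] by simp
  then obtain b where b: "b \<in># B" "g b = f a" by auto
  then obtain B' where B': "B = add_mset b B'" by (meson multi_member_split)
  have "image_mset f A = image_mset g B'" using add(2) B' b by simp
  from add(1)[OF this] obtain C where C: "image_mset fst C = A" "image_mset snd C = B'"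
    "\<forall>z\<in>#C. f (fst z) = g (snd z)" by blast
  then show ?case using B' b by (intro exI[of _ "add_mset (a, b) C"]) auto
qed

lemma image_mset_split: "image_mset f T = A + B \<Longrightarrow>
  \<exists>T1 T2. T = T1 + T2 \<and> image_mset f T1 = A \<and> image_mset f T2 = B"
proof (induction T arbitrary: A B)
  case empty
  then show ?case by auto
next
  case (add t T)
  have "f t \<in># A + B" using add(2)[symmetric] by simp
  then have "f t \<in># A \<or> f t \<in># B" by simp
  then show ?case
  proof
    assume "f t \<in># A"
    then obtain A' where A': "A = add_mset (f t) A'" by (meson multi_member_split)
    then have "image_mset f T = A' + B" using add(2) by simp
    from add(1)[OF this] obtain T1 T2 where "T = T1 + T2" "image_mset f T1 = A'" "image_mset f T2 = B" by blast
    then show ?thesis using A' by (intro exI[of _ "add_mset t T1"] exI[of _ T2]) auto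
  next
    assume "f t \<in># B"
    then obtain B' where B': "B = add_mset (f t) B'" by (meson multi_member_split)
    then have "image_mset f T = A + B'" using add(2) by simp
    from add(1)[OF this] obtain T1 T2 where "T = T1 + T2" "image_mset f T1 = A" "image_mset f T2 = B'" by blast
    then show ?thesis using B' by (intro exI[of _ T1] exI[of _ "add_mset t T2"]) auto
  qed
qed

lemma closed_sum:
  assumes "R {#} {#}" "\<And>a b c d. R a b \<Longrightarrow> R c d \<Longrightarrow> R (a + c) (b + d)"
    "\<And>p a b. R a b \<Longrightarrow> R (scale p a) (scale p b)" "\<forall>i\<in>#X. R (f i) (g i)"
  shows "R (\<Sum>i\<in>#X. scale (w i) (f i)) (\<Sum>i\<in>#X. scale (w i) (g i))"
  using assms(4)
proof (induction X)
  case empty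
  then show ?case using assms(1) by simp
next
  case (add x X)
  then show ?case using assms(2,3) by simp
qed

section \<open>Generic lifting LT\<close>

definition LT :: "(trm \<Rightarrow> mdist \<Rightarrow> bool) \<Rightarrow> mdist \<Rightarrow> mdist \<Rightarrow> bool" where
  "LT b m x \<longleftrightarrow> (\<exists>T. image_mset (\<lambda>t. (fst t, fst (snd t))) T = m \<and> (\<forall>t\<in>#T. b (fst (snd t)) (snd (snd t)))
      \<and> x = (\<Sum>t\<in>#T. scale (fst t) (snd (snd t))))"

lemma LT_empty: "LT b {#} {#}"
  unfolding LT_def by (intro exI[of _ "{#}"]) auto

lemma LT_add: "LT b m1 x1 \<Longrightarrow> LT b m2 x2 \<Longrightarrow> LT b (m1 + m2) (x1 + x2)"
  unfolding LT_def
proof (elim exE conjE)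
  fix T1 T2
  assume "image_mset (\<lambda>t. (fst t, fst (snd t))) T1 = m1" "\<forall>t\<in>#T1. b (fst (snd t)) (snd (snd t))"
    "x1 = (\<Sum>t\<in>#T1. scale (fst t) (snd (snd t)))"
    "image_mset (\<lambda>t. (fst t, fst (snd t))) T2 = m2" "\<forall>t\<in>#T2. b (fst (snd t)) (snd (snd t))"
    "x2 = (\<Sum>t\<in>#T2. scale (fst t) (snd (snd t)))"
  then show "\<exists>T. image_mset (\<lambda>t. (fst t, fst (snd t))) T = m1 + m2 \<and> (\<forall>t\<in>#T. b (fst (snd t)) (snd (snd t))) \<and>
     x1 + x2 = (\<Sum>t\<in>#T. scale (fst t) (snd (snd t)))"
    by (intro exI[of _ "T1 + T2"]) auto
qed

lemma LT_scale: "LT b m x \<Longrightarrow> LT b (scale p m) (scale p x)"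
  unfolding LT_def
proof (elim exE conjE)
  fix T
  assume a: "image_mset (\<lambda>t. (fst t, fst (snd t))) T = m" "\<forall>t\<in>#T. b (fst (snd t)) (snd (snd t))"
    "x = (\<Sum>t\<in>#T. scale (fst t) (snd (snd t)))"
  let ?T = "image_mset (\<lambda>t. (p * fst t, snd t)) T"
  have "image_mset (\<lambda>t. (fst t, fst (snd t))) ?T = scale p m"
    using a(1) unfolding scale_def by (auto simp: multiset.map_comp comp_def case_prod_beta)
  moreover have "scale p x = (\<Sum>t\<in>#?T. scale (fst t) (snd (snd t)))"
    using a(3) by (simp add: scale_sum multiset.map_comp comp_def)
  ultimately show "\<exists>T. image_mset (\<lambda>t. (fst t, fst (snd t))) T = scale p m \<and> (\<forall>t\<in>#T. b (fst (snd t)) (snd (snd t))) \<and>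
     scale p x = (\<Sum>t\<in>#T. scale (fst t) (snd (snd t)))"
    using a(2) by (intro exI[of _ ?T]) auto
qed

lemma LT_dirac: "b M n \<Longrightarrow> LT b (dirac M) n"
  unfolding LT_def dirac_def by (intro exI[of _ "{#(1, M, n)#}"]) auto

lemma LT_mono: "LT b m x \<Longrightarrow> (\<And>M n. b M n \<Longrightarrow> b' M n) \<Longrightarrow> LT b' m x"
  unfolding LT_def by blast

lemma LT_refl: "(\<And>M. b M (dirac M)) \<Longrightarrow> LT b m m"
proof -
  assume h: "\<And>M. b M (dirac M)"
  have "LT b (\<Sum>x\<in>#m. scale (fst x) (dirac (snd x))) (\<Sum>x\<in>#m. scale (fst x) (dirac (snd x)))"
    by (rule closed_sum[where R="LT b"]) (auto intro: LT_empty LT_add LT_scale LT_dirac h)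
  then show ?thesis using decomp[of m] by simp
qed

lemma LT_sum: "\<forall>i\<in>#X. LT b (f i) (g i) \<Longrightarrow> LT b (\<Sum>i\<in>#X. scale (w i) (f i)) (\<Sum>i\<in>#X. scale (w i) (g i))"
  by (rule closed_sum[where R="LT b"]) (auto intro: LT_empty LT_add LT_scale)

lemma LT_split: "LT b (m1 + m2) x \<Longrightarrow> \<exists>x1 x2. x = x1 + x2 \<and> LT b m1 x1 \<and> LT b m2 x2"
  unfolding LT_def
proof (elim exE conjE)
  fix T
  assume a: "image_mset (\<lambda>t. (fst t, fst (snd t))) T = m1 + m2" "\<forall>t\<in>#T. b (fst (snd t)) (snd (snd t))"
    "x = (\<Sum>t\<in>#T. scale (fst t) (snd (snd t)))"
  from image_mset_split[OF a(1)] obtain T1 T2 where T: "T = T1 + T2"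
    "image_mset (\<lambda>t. (fst t, fst (snd t))) T1 = m1" "image_mset (\<lambda>t. (fst t, fst (snd t))) T2 = m2" by blast
  then show "\<exists>x1 x2. x = x1 + x2 \<and>
      (\<exists>T. image_mset (\<lambda>t. (fst t, fst (snd t))) T = m1 \<and> (\<forall>t\<in>#T. b (fst (snd t)) (snd (snd t))) \<and> x1 = (\<Sum>t\<in>#T. scale (fst t) (snd (snd t)))) \<and>
      (\<exists>T. image_mset (\<lambda>t. (fst t, fst (snd t))) T = m2 \<and> (\<forall>t\<in>#T. b (fst (snd t)) (snd (snd t))) \<and> x2 = (\<Sum>t\<in>#T. scale (fst t) (snd (snd t))))"
    using a(2,3) by (intro exI[of _ "\<Sum>t\<in>#T1. scale (fst t) (snd (snd t))"] exI[of _ "\<Sum>t\<in>#T2. scale (fst t) (snd (snd t))"]) auto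
qed

lemma map2_map_map: "map2 f (map g ts) (map h ts) = map (\<lambda>t. f (g t) (h t)) ts"
  by (induction ts) auto

lemma list_all2_map_map: "(\<forall>t\<in>set ts. P (g t) (h t)) \<Longrightarrow> list_all2 P (map g ts) (map h ts)"
  by (induction ts) auto

lemma sum_mset_list_map: "(\<Sum>t\<in>#mset ts. g t) = sum_list (map g ts)"
  by (induction ts) auto

lemma lift_LT: "lift r m x \<longleftrightarrow> LT (\<lambda>M n. n = dirac M \<or> r M n) m x"
proof
  assume "lift r m x"
  then show "LT (\<lambda>M n. n = dirac M \<or> r M n) m x"
  proof (induction rule: lift.induct)
    case (refl M)
    then show ?case by (intro LT_dirac) simp
  next
    case (step M m)
    then show ?case by (intro LT_dirac) simp
  next
    case (sum xs ns)
    then show ?case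
    proof (induction rule: list_all2_induct)
      case Nil
      then show ?case using LT_empty by simp
    next
      case (Cons x xs n ns)
      have "LT (\<lambda>M n. n = dirac M \<or> r M n) (scale (fst x) (dirac (snd x))) (scale (fst x) n)"
        using Cons(1) LT_scale by blast
      from LT_add[OF this Cons(3)] show ?case by simp
    qed
  qed
next
  assume "LT (\<lambda>M n. n = dirac M \<or> r M n) m x"
  then obtain T where T: "image_mset (\<lambda>t. (fst t, fst (snd t))) T = m"
    "\<forall>t\<in>#T. snd (snd t) = dirac (fst (snd t)) \<or> r (fst (snd t)) (snd (snd t))"
    "x = (\<Sum>t\<in>#T. scale (fst t) (snd (snd t)))" unfolding LT_def by blast
  obtain ts where ts: "mset ts = T" using ex_mset by blast
  have "list_all2 (\<lambda>x n. lift r (dirac (snd x)) n) (map (\<lambda>t. (fst t, fst (snd t))) ts) (map (\<lambda>t. snd (snd t)) ts)"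
  proof (intro list_all2_map_map ballI)
    fix t assume "t \<in> set ts"
    then have "snd (snd t) = dirac (fst (snd t)) \<or> r (fst (snd t)) (snd (snd t))" using T(2) ts by auto
    then show "lift r (dirac (snd (fst t, fst (snd t)))) (snd (snd t))" by (elim disjE) (simp_all add: lift.refl lift.step)
  qed
  from lift.sum[OF this] have "lift r (mset (map (\<lambda>t. (fst t, fst (snd t))) ts))
     (sum_list (map (\<lambda>t. scale (fst t) (snd (snd t))) ts))" by (simp add: map2_map_map)
  moreover have "sum_list (map (\<lambda>t. scale (fst t) (snd (snd t))) ts) = x"
    using T(3) ts sum_mset_list_map by metis
  ultimately show "lift r m x" using T(1) ts by simp
qed

lemma full_lift_LT: "full_lift r m x \<longleftrightarrow> LT (\<lambda>M n. (normal M \<and> n = dirac M) \<or> r M n) m x"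
proof
  assume "full_lift r m x"
  then show "LT (\<lambda>M n. (normal M \<and> n = dirac M) \<or> r M n) m x"
  proof (induction rule: full_lift.induct)
    case (refl M)
    then show ?case by (intro LT_dirac) simp
  next
    case (step M m)
    then show ?case by (intro LT_dirac) simp
  next
    case (sum xs ns)
    then show ?case
    proof (induction rule: list_all2_induct)
      case Nil
      then show ?case using LT_empty by simp
    next
      case (Cons x xs n ns)
      have "LT (\<lambda>M n. (normal M \<and> n = dirac M) \<or> r M n) (scale (fst x) (dirac (snd x))) (scale (fst x) n)"
        using Cons(1) LT_scale by blast
      from LT_add[OF this Cons(3)] show ?case by simp
    qed
  qed
next
  assume "LT (\<lambda>M n. (normal M \<and> n = dirac M) \<or> r M n) m x"
  then obtain T where T: "image_mset (\<lambda>t. (fst t, fst (snd t))) T = m"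
    "\<forall>t\<in>#T. (normal (fst (snd t)) \<and> snd (snd t) = dirac (fst (snd t))) \<or> r (fst (snd t)) (snd (snd t))"
    "x = (\<Sum>t\<in>#T. scale (fst t) (snd (snd t)))" unfolding LT_def by blast
  obtain ts where ts: "mset ts = T" using ex_mset by blast
  have "list_all2 (\<lambda>x n. full_lift r (dirac (snd x)) n) (map (\<lambda>t. (fst t, fst (snd t))) ts) (map (\<lambda>t. snd (snd t)) ts)"
  proof (intro list_all2_map_map ballI)
    fix t assume "t \<in> set ts"
    then have "(normal (fst (snd t)) \<and> snd (snd t) = dirac (fst (snd t))) \<or> r (fst (snd t)) (snd (snd t))" using T(2) ts by auto
    then show "full_lift r (dirac (snd (fst t, fst (snd t)))) (snd (snd t))" by (elim disjE) (simp_all add: full_lift.refl full_lift.step)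
  qed
  from full_lift.sum[OF this] have "full_lift r (mset (map (\<lambda>t. (fst t, fst (snd t))) ts))
     (sum_list (map (\<lambda>t. scale (fst t) (snd (snd t))) ts))" by (simp add: map2_map_map)
  moreover have "sum_list (map (\<lambda>t. scale (fst t) (snd (snd t))) ts) = x"
    using T(3) ts sum_mset_list_map by metis
  ultimately show "full_lift r m x" using T(1) ts by simp
qed

section \<open>Couplings\<close>

definition cpl :: "(trm \<Rightarrow> trm \<Rightarrow> bool) \<Rightarrow> mdist \<Rightarrow> mdist \<Rightarrow> bool" where
  "cpl R m m' \<longleftrightarrow> (\<exists>T. image_mset (\<lambda>t. (fst t, fst (snd t))) T = m \<and> image_mset (\<lambda>t. (fst t, snd (snd t))) T = m'
     \<and> (\<forall>t\<in>#T. R (fst (snd t)) (snd (snd t))))"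

lemma cpl_empty: "cpl R {#} {#}"
  unfolding cpl_def by (intro exI[of _ "{#}"]) auto

lemma cpl_add: "cpl R a b \<Longrightarrow> cpl R c d \<Longrightarrow> cpl R (a + c) (b + d)"
  unfolding cpl_def
proof (elim exE conjE)
  fix T1 T2
  assume "image_mset (\<lambda>t. (fst t, fst (snd t))) T1 = a" "image_mset (\<lambda>t. (fst t, snd (snd t))) T1 = b"
    "\<forall>t\<in>#T1. R (fst (snd t)) (snd (snd t))"
    "image_mset (\<lambda>t. (fst t, fst (snd t))) T2 = c" "image_mset (\<lambda>t. (fst t, snd (snd t))) T2 = d"
    "\<forall>t\<in>#T2. R (fst (snd t)) (snd (snd t))"
  then show "\<exists>T. image_mset (\<lambda>t. (fst t, fst (snd t))) T = a + c \<and> image_mset (\<lambda>t. (fst t, snd (snd t))) T = b + d \<and>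
     (\<forall>t\<in>#T. R (fst (snd t)) (snd (snd t)))"
    by (intro exI[of _ "T1 + T2"]) auto
qed

lemma cpl_scale: "cpl R a b \<Longrightarrow> cpl R (scale p a) (scale p b)"
  unfolding cpl_def
proof (elim exE conjE)
  fix T
  assume a: "image_mset (\<lambda>t. (fst t, fst (snd t))) T = a" "image_mset (\<lambda>t. (fst t, snd (snd t))) T = b"
    "\<forall>t\<in>#T. R (fst (snd t)) (snd (snd t))"
  let ?T = "image_mset (\<lambda>t. (p * fst t, snd t)) T"
  show "\<exists>T. image_mset (\<lambda>t. (fst t, fst (snd t))) T = scale p a \<and> image_mset (\<lambda>t. (fst t, snd (snd t))) T = scale p b \<and>
     (\<forall>t\<in>#T. R (fst (snd t)) (snd (snd t)))"
    using a unfolding scale_def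
    by (intro exI[of _ ?T]) (auto simp: multiset.map_comp comp_def case_prod_beta)
qed

lemma cpl_dirac: "R a b \<Longrightarrow> cpl R (dirac a) (dirac b)"
  unfolding cpl_def dirac_def by (intro exI[of _ "{#(1, a, b)#}"]) auto

lemma cpl_sum: "\<forall>i\<in>#X. cpl R (f i) (g i) \<Longrightarrow> cpl R (\<Sum>i\<in>#X. scale (w i) (f i)) (\<Sum>i\<in>#X. scale (w i) (g i))"
  by (rule closed_sum[where R="cpl R"]) (auto intro: cpl_empty cpl_add cpl_scale)

lemma cpl_map: "cpl R m m' \<Longrightarrow> (\<And>a b. R a b \<Longrightarrow> R' (f a) (g b)) \<Longrightarrow> cpl R' (map_trm f m) (map_trm g m')"
  unfolding cpl_def
proof (elim exE conjE)
  fix T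
  assume a: "image_mset (\<lambda>t. (fst t, fst (snd t))) T = m" "image_mset (\<lambda>t. (fst t, snd (snd t))) T = m'"
    "\<forall>t\<in>#T. R (fst (snd t)) (snd (snd t))" and h: "\<And>a b. R a b \<Longrightarrow> R' (f a) (g b)"
  let ?T = "image_mset (\<lambda>t. (fst t, f (fst (snd t)), g (snd (snd t)))) T"
  show "\<exists>T. image_mset (\<lambda>t. (fst t, fst (snd t))) T = map_trm f m \<and> image_mset (\<lambda>t. (fst t, snd (snd t))) T = map_trm g m' \<and>
     (\<forall>t\<in>#T. R' (fst (snd t)) (snd (snd t)))"
    using a h unfolding map_trm_def
    by (intro exI[of _ ?T]) (auto simp: multiset.map_comp comp_def case_prod_beta)
qed

lemma obs_add[simp]: "obs_Nnf (a + b) N = obs_Nnf a N + obs_Nnf b N"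
  unfolding obs_Nnf_def by simp
lemma obs_empty[simp]: "obs_Nnf {#} N = 0"
  unfolding obs_Nnf_def by simp
lemma obs_single[simp]: "obs_Nnf {#x#} N = (if normal N \<and> snd x = N then fst x else 0)"
  unfolding obs_Nnf_def by simp
lemma obs_add_mset[simp]: "obs_Nnf (add_mset x a) N = (if normal N \<and> snd x = N then fst x else 0) + obs_Nnf a N"
  unfolding obs_Nnf_def by simp
lemma scale_add_mset[simp]: "scale p (add_mset x a) = add_mset (p * fst x, snd x) (scale p a)"
  unfolding scale_def by (simp add: case_prod_beta)
lemma obs_scale[simp]: "obs_Nnf (scale p a) N = p * obs_Nnf a N"
  by (induction a) (auto simp: algebra_simps)
lemma obs_dirac: "obs_Nnf (dirac M) N = (if normal N \<and> M = N then 1 else 0)"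
  unfolding dirac_def by simp
lemma obs_sum: "obs_Nnf (\<Sum>i\<in>#X. f i) N = (\<Sum>i\<in>#X. obs_Nnf (f i) N)"
  by (induction X) auto




inductive sstep :: "trm \<Rightarrow> mdist \<Rightarrow> bool" where
  rb: "is_value V \<Longrightarrow> sstep (App (Lam M) V) (dirac (subst M 0 V))"
| rc: "sstep (Choice M N) {#(1/2, M), (1/2, N)#}"
| sl: "sstep M m \<Longrightarrow> sstep (App M N) (map_trm (\<lambda>P. App P N) m)"
| sr: "sstep N m \<Longrightarrow> sstep (App M N) (map_trm (\<lambda>P. App M P) m)"

inductive_cases sstep_AppE: "sstep (App M N) b"
inductive_cases sstep_ChoiceE: "sstep (Choice M N) b"
inductive_cases sstep_LamE: "sstep (Lam M) b"
inductive_cases sstep_VarE: "sstep (Var i) b"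

lemma sstep_not_value: "sstep M m \<Longrightarrow> \<not> is_value M"
  by (cases rule: sstep.cases) auto

lemma bw_sstep: "beta_weak M M' \<Longrightarrow> sstep M (dirac M')"
proof (induction rule: beta_weak.induct)
  case (root V M)
  then show ?case by (rule sstep.rb)
next
  case (appL M M' N)
  then show ?case using sstep.sl[OF appL(2), of N] by simp
next
  case (appR N N' M)
  then show ?case using sstep.sr[OF appR(2), of M] by simp
qed

lemma ox_sstep: "oplus_step M m \<Longrightarrow> sstep M m"
  by (induction rule: oplus_step.induct) (auto intro: sstep.intros)

lemma sstep_surface: "sstep M m \<Longrightarrow> surface_step M m"
proof (induction rule: sstep.induct)
  case (rb V M)
  then show ?case unfolding surface_step_def by (auto intro: beta_weak.root)
next
  case (rc M N)
  then show ?case unfolding surface_step_def by (auto intro: oplus_step.root)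
next
  case (sl M m N)
  then show ?case unfolding surface_step_def by (auto intro: beta_weak.appL oplus_step.appL)
next
  case (sr N m M)
  then show ?case unfolding surface_step_def by (auto intro: beta_weak.appR oplus_step.appR)
qed

lemma surface_sstep: "surface_step M m \<longleftrightarrow> sstep M m"
  using sstep_surface bw_sstep ox_sstep unfolding surface_step_def by blast

lemma map_trm_add_mset[simp]: "map_trm f (add_mset x a) = add_mset (fst x, f (snd x)) (map_trm f a)"
  unfolding map_trm_def by (simp add: case_prod_beta)

lemma LT_map: "LT b a z \<Longrightarrow> (\<And>M n. b M n \<Longrightarrow> b (f M) (map_trm f n)) \<Longrightarrow> LT b (map_trm f a) (map_trm f z)"
  unfolding LT_def
proof (elim exE conjE)
  fix T
  assume a: "image_mset (\<lambda>t. (fst t, fst (snd t))) T = a" "\<forall>t\<in>#T. b (fst (snd t)) (snd (snd t))"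
    "z = (\<Sum>t\<in>#T. scale (fst t) (snd (snd t)))" and h: "\<And>M n. b M n \<Longrightarrow> b (f M) (map_trm f n)"
  let ?T = "image_mset (\<lambda>t. (fst t, f (fst (snd t)), map_trm f (snd (snd t)))) T"
  have "image_mset (\<lambda>t. (fst t, fst (snd t))) ?T = map_trm f a"
    using a(1) unfolding map_trm_def by (auto simp: multiset.map_comp comp_def case_prod_beta)
  moreover have "map_trm f z = (\<Sum>t\<in>#?T. scale (fst t) (snd (snd t)))"
    using a(3) by (simp add: map_trm_sum multiset.map_comp comp_def)
  ultimately show "\<exists>T. image_mset (\<lambda>t. (fst t, fst (snd t))) T = map_trm f a \<and> (\<forall>t\<in>#T. b (fst (snd t)) (snd (snd t))) \<and>
     map_trm f z = (\<Sum>t\<in>#T. scale (fst t) (snd (snd t)))"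
    using a(2) h by (intro exI[of _ ?T]) auto
qed

lemma map_trm_decomp: "map_trm f a = (\<Sum>x\<in>#a. scale (fst x) (dirac (f (snd x))))"
  by (induction a) auto

lemma scale_map_expand: "scale p (map_trm g b) = (\<Sum>y\<in>#b. {#(p * fst y, g (snd y))#})"
  by (induction b) auto

lemma cross_join:
  assumes "sstep M a0" "sstep N b0"
  shows "\<exists>z. LT sstep (map_trm (\<lambda>P. App P N) a0) z \<and> LT sstep (map_trm (\<lambda>Q. App M Q) b0) z"
proof -
  let ?z1 = "\<Sum>x\<in>#a0. scale (fst x) (map_trm (\<lambda>Q. App (snd x) Q) b0)"
  let ?z2 = "\<Sum>y\<in>#b0. scale (fst y) (map_trm (\<lambda>P. App P (snd y)) a0)"
  have 1: "LT sstep (map_trm (\<lambda>P. App P N) a0) ?z1"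
    unfolding map_trm_decomp[of _ a0]
    by (rule LT_sum) (auto intro!: LT_dirac sstep.sr assms(2))
  have 2: "LT sstep (map_trm (\<lambda>Q. App M Q) b0) ?z2"
    unfolding map_trm_decomp[of _ b0]
    by (rule LT_sum) (auto intro!: LT_dirac sstep.sl assms(1))
  have "?z1 = ?z2"
    unfolding scale_map_expand
    by (subst sum_mset_swap) (simp add: mult.commute)
  then show ?thesis using 1 2 by auto
qed

lemma sstep_diamond: "sstep M a \<Longrightarrow> sstep M b \<Longrightarrow> a \<noteq> b \<Longrightarrow> \<exists>z. LT sstep a z \<and> LT sstep b z"
proof (induction arbitrary: b rule: sstep.induct)
  case (rb V P)
  from rb(2) show ?case
  proof (cases rule: sstep_AppE[consumes 1])
    case 1
    have "b = dirac (subst P 0 V)" using 1 by auto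
    then show ?thesis using rb(3) by auto
  next
    case (2 m)
    show ?thesis using 2 by (auto elim: sstep_LamE)
  next
    case (3 m)
    show ?thesis using 3 rb(1) sstep_not_value by blast
  qed
next
  case (rc M N)
  then show ?case by (auto elim: sstep_ChoiceE)
next
  case (sl M m N)
  from sl(3) show ?case
  proof (cases rule: sstep_AppE[consumes 1])
    case (1 P0)
    show ?thesis using 1 sl(1) by (auto elim: sstep_LamE)
  next
    case (2 m')
    have "m \<noteq> m'" using 2 sl(4) by auto
    from sl(2)[OF 2(2) this] obtain z0 where "LT sstep m z0" "LT sstep m' z0" by blast
    then show ?thesis using 2
      by (intro exI[of _ "map_trm (\<lambda>P. App P N) z0"]) (auto intro!: LT_map sstep.sl)
  next
    case (3 m')
    show ?thesis using 3 cross_join[OF sl(1) 3(2)] by auto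
  qed
next
  case (sr N m M)
  from sr(3) show ?case
  proof (cases rule: sstep_AppE[consumes 1])
    case (1 P0)
    show ?thesis using 1 sr(1) sstep_not_value by blast
  next
    case (2 m')
    show ?thesis using 2 cross_join[OF 2(2) sr(1)] by auto
  next
    case (3 m')
    have "m \<noteq> m'" using 3 sr(4) by auto
    from sr(2)[OF 3(2) this] obtain z0 where "LT sstep m z0" "LT sstep m' z0" by blast
    then show ?thesis using 3
      by (intro exI[of _ "map_trm (\<lambda>P. App M P) z0"]) (auto intro!: LT_map sstep.sr)
  qed
qed

inductive_cases bw_AppE: "beta_weak (App M N) b"

lemma bw_not_value: "beta_weak M M' \<Longrightarrow> \<not> is_value M"
  by (cases rule: beta_weak.cases) auto

lemma bw_diamond: "beta_weak M A \<Longrightarrow> beta_weak M B \<Longrightarrow> A \<noteq> B \<Longrightarrow> \<exists>C. beta_weak A C \<and> beta_weak B C"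
proof (induction arbitrary: B rule: beta_weak.induct)
  case (root V P)
  from root(2) show ?case
    by (cases rule: bw_AppE[consumes 1]) (use root in \<open>auto dest: bw_not_value\<close>)
next
  case (appL M M' N)
  from appL(3) show ?case
  proof (cases rule: bw_AppE[consumes 1])
    case (1 P0)
    show ?thesis using 1 appL(1) bw_not_value by fastforce
  next
    case (2 M'')
    show ?thesis using 2 appL by (auto intro: beta_weak.appL)
  next
    case (3 N')
    show ?thesis using 3 appL by (auto intro: beta_weak.appL beta_weak.appR)
  qed
next
  case (appR N N' M)
  from appR(3) show ?case
  proof (cases rule: bw_AppE[consumes 1])
    case (1 P0)
    show ?thesis using 1 appR(1) bw_not_value by fastforce
  next
    case (2 M')
    show ?thesis using 2 appR by (auto intro: beta_weak.appL beta_weak.appR)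
  next
    case (3 N'')
    show ?thesis using 3 appR by (auto intro: beta_weak.appR)
  qed
qed

inductive_cases U_AppE: "U_step (App M N) b"
inductive_cases U_LamE: "U_step (Lam M) b"
inductive_cases U_ChoiceE: "U_step (Choice M N) b"

lemma U_diamond: "U_step M A \<Longrightarrow> U_step M B \<Longrightarrow> A \<noteq> B \<Longrightarrow> \<exists>C. U_step A C \<and> U_step B C"
proof (induction arbitrary: B rule: U_step.induct)
  case (weak M M')
  note h1 = weak(1) and h3 = weak(3)
  from weak(2) show ?case
  proof (cases rule: U_step.cases)
    case (weak)
    then show ?thesis using bw_diamond[OF h1] h3 by (auto intro: U_step.weak)
  qed (use h1 in \<open>auto simp: weak_normal_def\<close>)
next
  case (lam P P')
  from lam(4) show ?case
  proof (cases rule: U_LamE[consumes 1])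
    case 1
    show ?thesis using 1 by (auto elim: beta_weak.cases)
  next
    case (2 P'')
    then have "P' \<noteq> P''" using lam(5) by auto
    from lam(3)[OF 2(2) this] obtain C where "U_step P' C" "U_step P'' C" by blast
    then show ?thesis using 2 by (auto intro: U_step.lam[OF wn_Lam])
  qed
next
  case (appL P Q P')
  have wP: "weak_normal P" using appL(1) by (simp add: wn_App)
  from appL(4) show ?case
  proof (cases rule: U_AppE[consumes 1])
    case 1
    show ?thesis using 1 appL(1) unfolding weak_normal_def by blast
  next
    case (2 P'')
    have ne: "P' \<noteq> P''" using 2 appL(5) by auto
    from appL(3)[OF 2(3) ne] obtain C where C: "U_step P' C" "U_step P'' C" by blast
    have "weak_normal (App P' Q)" using U_pres[OF appL(2) wP] appL(1) by (auto simp: wn_App)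
    moreover have "weak_normal (App P'' Q)" using U_pres[OF 2(3) wP] appL(1) by (auto simp: wn_App)
    ultimately show ?thesis using C 2 by (auto intro: U_step.appL)
  next
    case (3 Q')
    have wQ: "weak_normal Q" using appL(1) by (simp add: wn_App)
    have "weak_normal (App P' Q)" using U_pres[OF appL(2) wP] appL(1) by (auto simp: wn_App)
    moreover have "weak_normal (App P Q')" using U_pres[OF 3(3) wQ] appL(1) by (auto simp: wn_App)
    ultimately show ?thesis using 3 appL(2) by (auto intro: U_step.appL U_step.appR)
  qed
next
  case (appR P Q Q')
  have wQ: "weak_normal Q" using appR(1) by (simp add: wn_App)
  from appR(4) show ?case
  proof (cases rule: U_AppE[consumes 1])
    case 1
    show ?thesis using 1 appR(1) unfolding weak_normal_def by blast
  next
    case (2 P')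
    have wP: "weak_normal P" using appR(1) by (simp add: wn_App)
    have "weak_normal (App P Q')" using U_pres[OF appR(2) wQ] appR(1) by (auto simp: wn_App)
    moreover have "weak_normal (App P' Q)" using U_pres[OF 2(3) wP] appR(1) by (auto simp: wn_App)
    ultimately show ?thesis using 2 appR(2) by (auto intro: U_step.appL U_step.appR)
  next
    case (3 Q'')
    have ne: "Q' \<noteq> Q''" using 3 appR(5) by auto
    from appR(3)[OF 3(3) ne] obtain C where C: "U_step Q' C" "U_step Q'' C" by blast
    have "weak_normal (App P Q')" using U_pres[OF appR(2) wQ] appR(1) by (auto simp: wn_App)
    moreover have "weak_normal (App P Q'')" using U_pres[OF 3(3) wQ] appR(1) by (auto simp: wn_App)
    ultimately show ?thesis using C 3 by (auto intro: U_step.appR)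
  qed
next
  case (choiceL P Q P')
  from choiceL(4) show ?case
  proof (cases rule: U_ChoiceE[consumes 1])
    case 1
    show ?thesis using 1 by (auto elim: beta_weak.cases)
  next
    case (2 P'')
    then have "P' \<noteq> P''" using choiceL(5) by auto
    from choiceL(3)[OF 2(2) this] obtain C where "U_step P' C" "U_step P'' C" by blast
    then show ?thesis using 2 by (auto intro: U_step.choiceL[OF wn_Choice])
  next
    case (3 Q')
    have "U_step (Choice P' Q) (Choice P' Q')" "U_step (Choice P Q') (Choice P' Q')"
      using 3 choiceL(2) by (auto intro: U_step.choiceL[OF wn_Choice] U_step.choiceR[OF wn_Choice])
    then show ?thesis using 3 by auto
  qed
next
  case (choiceR P Q Q')
  from choiceR(4) show ?case
  proof (cases rule: U_ChoiceE[consumes 1])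
    case 1
    show ?thesis using 1 by (auto elim: beta_weak.cases)
  next
    case (2 P')
    have "U_step (Choice P Q') (Choice P' Q')" "U_step (Choice P' Q) (Choice P' Q')"
      using 2 choiceR(2) by (auto intro: U_step.choiceL[OF wn_Choice] U_step.choiceR[OF wn_Choice])
    then show ?thesis using 2 by auto
  next
    case (3 Q'')
    then have "Q' \<noteq> Q''" using choiceR(5) by auto
    from choiceR(3)[OF 3(2) this] obtain C where "U_step Q' C" "U_step Q'' C" by blast
    then show ?thesis using 3 by (auto intro: U_step.choiceR[OF wn_Choice])
  qed
qed




lemma E_sstep: "sstep M n \<Longrightarrow> E_step M n"
  unfolding E_step_def surface_normal_def using sstep_surface by blast

lemma E_U: "surface_normal M \<Longrightarrow> U_step M M' \<Longrightarrow> E_step M (dirac M')"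
  unfolding E_step_def by blast

lemma sn_iff: "surface_normal M \<longleftrightarrow> weak_normal M \<and> \<not> (\<exists>n. oplus_step M n)"
  unfolding surface_normal_def surface_step_def weak_normal_def by blast

inductive_cases ox_AppE: "oplus_step (App M N) b"
inductive_cases ox_LamE: "oplus_step (Lam M) b"

lemma U_ox: "U_step P P' \<Longrightarrow> weak_normal P \<Longrightarrow> oplus_step P' n \<Longrightarrow> \<exists>n'. oplus_step P n'"
proof (induction arbitrary: n rule: U_step.induct)
  case (weak M M')
  then show ?case unfolding weak_normal_def by blast
next
  case (lam P P')
  then show ?case by (auto elim: ox_LamE)
next
  case (appL P Q P')
  have wP: "weak_normal P" using appL(1) by (simp add: wn_App)
  from appL(5) show ?case
  proof (cases rule: ox_AppE[consumes 1])
    case (1 m)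
    then show ?thesis using appL(3)[OF wP] by (auto intro: oplus_step.appL)
  next
    case (2 m)
    then show ?thesis by (auto intro: oplus_step.appR)
  qed
next
  case (appR P Q Q')
  have wQ: "weak_normal Q" using appR(1) by (simp add: wn_App)
  from appR(5) show ?case
  proof (cases rule: ox_AppE[consumes 1])
    case (1 m)
    then show ?thesis by (auto intro: oplus_step.appL)
  next
    case (2 m)
    then show ?thesis using appR(3)[OF wQ] by (auto intro: oplus_step.appR)
  qed
next
  case (choiceL P Q P')
  then show ?case by (auto intro: oplus_step.root)
next
  case (choiceR P Q Q')
  then show ?case by (auto intro: oplus_step.root)
qed

lemma sn_U: "surface_normal M \<Longrightarrow> U_step M M' \<Longrightarrow> surface_normal M'"
  using U_pres U_ox unfolding sn_iff by blast

lemma step_E_normal: "E_step M n \<Longrightarrow> \<not> normal M"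
  unfolding E_step_def normal_def step_def surface_step_def using U_full bw_full by blast

lemma BU: "beta_full M M' \<Longrightarrow> \<exists>M''. U_step M M''"
proof (induction rule: beta_full.induct)
  case (root V M)
  then show ?case by (auto intro: U_step.weak beta_weak.root)
next
  case (appL M M' N)
  then obtain X where X: "U_step M X" by blast
  show ?case
  proof (cases "weak_normal (App M N)")
    case True
    then show ?thesis using U_step.appL[OF True X] by blast
  next
    case False
    then show ?thesis unfolding weak_normal_def by (blast intro: U_step.weak)
  qed
next
  case (appR N N' M)
  then obtain X where X: "U_step N X" by blast
  show ?case
  proof (cases "weak_normal (App M N)")
    case True
    then show ?thesis using U_step.appR[OF True X] by blast
  next
    case False
    then show ?thesis unfolding weak_normal_def by (blast intro: U_step.weak)
  qed
next
  case (lam M M')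
  then show ?case by (auto intro: U_step.lam[OF wn_Lam])
next
  case (choiceL M M' N)
  then show ?case by (auto intro: U_step.choiceL[OF wn_Choice])
next
  case (choiceR N N' M)
  then show ?case by (auto intro: U_step.choiceR[OF wn_Choice])
qed

lemma E_total: "\<not> normal M \<Longrightarrow> \<exists>n. E_step M n"
proof -
  assume "\<not> normal M"
  then obtain m where m: "step M m" unfolding normal_def by blast
  show ?thesis
  proof (cases "surface_normal M")
    case True
    then have "\<not> oplus_step M m" unfolding surface_normal_def surface_step_def by blast
    then obtain M' where "beta_full M M'" using m unfolding step_def by blast
    then obtain M'' where "U_step M M''" using BU by blast
    then show ?thesis using True E_U by blast
  next
    case False
    then show ?thesis unfolding E_step_def surface_normal_def by blast
  qed
qed

definition mass :: "mdist \<Rightarrow> real" where "mass m = sum_mset (image_mset fst m)"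
definition nonneg :: "mdist \<Rightarrow> bool" where "nonneg m \<longleftrightarrow> (\<forall>x\<in>#m. 0 \<le> fst x)"

lemma mass_add[simp]: "mass (a + b) = mass a + mass b" unfolding mass_def by simp
lemma mass_empty[simp]: "mass {#} = 0" unfolding mass_def by simp
lemma mass_scale[simp]: "mass (scale p a) = p * mass a"
  unfolding mass_def by (induction a) (auto simp: algebra_simps)
lemma mass_dirac[simp]: "mass (dirac M) = 1" unfolding mass_def dirac_def by simp
lemma mass_map[simp]: "mass (map_trm f a) = mass a"
  unfolding mass_def by (induction a) auto
lemma mass_sum: "mass (\<Sum>i\<in>#X. scale (w i) (f i)) = (\<Sum>i\<in>#X. w i * mass (f i))"
  by (induction X) auto
lemma nonneg_add[simp]: "nonneg (a + b) \<longleftrightarrow> nonneg a \<and> nonneg b" unfolding nonneg_def by auto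
lemma nonneg_empty[simp]: "nonneg {#}" unfolding nonneg_def by auto
lemma nonneg_dirac[simp]: "nonneg (dirac M)" unfolding nonneg_def dirac_def by auto
lemma nonneg_scale: "0 \<le> p \<Longrightarrow> nonneg a \<Longrightarrow> nonneg (scale p a)"
  unfolding nonneg_def scale_def by auto
lemma nonneg_map[simp]: "nonneg (map_trm f a) = nonneg a"
  unfolding nonneg_def map_trm_def by auto

lemma sstep_mass: "sstep M n \<Longrightarrow> nonneg n \<and> mass n = 1"
proof (induction rule: sstep.induct)
  case (rc M N)
  then show ?case by (auto simp: nonneg_def mass_def)
qed simp_all

lemma E_mass: "E_step M n \<Longrightarrow> nonneg n \<and> mass n = 1"
  unfolding E_step_def surface_sstep using sstep_mass by auto

lemma obs_nonneg: "nonneg n \<Longrightarrow> 0 \<le> obs_Nnf n N"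
  unfolding nonneg_def by (induction n) auto

lemma obs_le_mass: "nonneg n \<Longrightarrow> obs_Nnf n N \<le> mass n"
  unfolding nonneg_def mass_def by (induction n) auto

lemma nonneg_sum: "\<forall>i\<in>#X. 0 \<le> w i \<and> nonneg (f i) \<Longrightarrow> nonneg (\<Sum>i\<in>#X. scale (w i) (f i))"
  by (induction X) (auto intro: nonneg_scale)

lemma LT_nonneg: "LT b m x \<Longrightarrow> nonneg m \<Longrightarrow> (\<And>M n. b M n \<Longrightarrow> nonneg n) \<Longrightarrow> nonneg x"
  unfolding LT_def
proof (elim exE conjE)
  fix T
  assume a: "image_mset (\<lambda>t. (fst t, fst (snd t))) T = m" "\<forall>t\<in>#T. b (fst (snd t)) (snd (snd t))"
    "x = (\<Sum>t\<in>#T. scale (fst t) (snd (snd t)))" and nm: "nonneg m" and h: "\<And>M n. b M n \<Longrightarrow> nonneg n"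
  have "\<forall>t\<in>#T. 0 \<le> fst t \<and> nonneg (snd (snd t))"
    using a(1,2) nm h unfolding nonneg_def by fastforce
  then show "nonneg x" using a(3) nonneg_sum by simp
qed

lemma LT_mass: "LT b m x \<Longrightarrow> (\<And>M n. b M n \<Longrightarrow> mass n = 1) \<Longrightarrow> mass x = mass m"
  unfolding LT_def
proof (elim exE conjE)
  fix T
  assume a: "image_mset (\<lambda>t. (fst t, fst (snd t))) T = m" "\<forall>t\<in>#T. b (fst (snd t)) (snd (snd t))"
    "x = (\<Sum>t\<in>#T. scale (fst t) (snd (snd t)))" and h: "\<And>M n. b M n \<Longrightarrow> mass n = 1"
  have "mass x = (\<Sum>t\<in>#T. fst t * mass (snd (snd t)))"
    using a(3) mass_sum by simp
  also have "\<dots> = (\<Sum>t\<in>#T. fst t)"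
    using a(2) h by (intro arg_cong[where f=sum_mset] image_mset_cong) auto
  also have "\<dots> = mass m"
  proof -
    have "image_mset fst m = image_mset fst T"
      using a(1) by (metis (no_types, lifting) fst_conv image_mset_cong multiset.map_comp comp_def)
    then show ?thesis unfolding mass_def by simp
  qed
  finally show ?thesis .
qed

lemma E_diamond: "E_step M a \<Longrightarrow> E_step M b \<Longrightarrow> a \<noteq> b \<Longrightarrow> \<exists>z. LT E_step a z \<and> LT E_step b z"
proof (cases "surface_normal M")
  case True
  assume "E_step M a" "E_step M b" "a \<noteq> b"
  then obtain A B where AB: "U_step M A" "U_step M B" "a = dirac A" "b = dirac B"
    using True unfolding E_step_def by blast
  then have "A \<noteq> B" using \<open>a \<noteq> b\<close> by auto
  from U_diamond[OF AB(1,2) this] obtain C where C: "U_step A C" "U_step B C" by blast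
  have "E_step A (dirac C)" "E_step B (dirac C)"
    using C sn_U[OF True AB(1)] sn_U[OF True AB(2)] E_U by auto
  then show ?thesis using AB by (auto intro: LT_dirac)
next
  case False
  assume "E_step M a" "E_step M b" "a \<noteq> b"
  then have "sstep M a" "sstep M b" using False unfolding E_step_def surface_sstep by auto
  from sstep_diamond[OF this \<open>a \<noteq> b\<close>] obtain z where "LT sstep a z" "LT sstep b z" by blast
  then show ?thesis using E_sstep LT_mono by metis
qed

lemma LT_E_nonnormal: "LT E_step a z \<Longrightarrow> x \<in># a \<Longrightarrow> \<not> normal (snd x)"
  unfolding LT_def using step_E_normal by fastforce

lemma obs_nonnormal: "(\<And>x. x \<in># a \<Longrightarrow> \<not> normal (snd x)) \<Longrightarrow> obs_Nnf a N = 0"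
  by (induction a) auto




abbreviation PL :: "mdist \<Rightarrow> mdist \<Rightarrow> bool" where
  "PL \<equiv> LT (\<lambda>M n. n = dirac M \<or> E_step M n)"
abbreviation FL :: "mdist \<Rightarrow> mdist \<Rightarrow> bool" where
  "FL \<equiv> LT (\<lambda>M n. (normal M \<and> n = dirac M) \<or> E_step M n)"

lemma FL_PL: "FL a b \<Longrightarrow> PL a b"
  by (erule LT_mono) auto

lemma PL_refl: "PL m m"
  by (rule LT_refl) simp

lemma single_decomp: "{#x#} = scale (fst x) (dirac (snd x))"
  by simp

lemma FL_total: "\<exists>z. FL m z"
proof (induction m)
  case empty
  then show ?case using LT_empty by blast
next
  case (add x m)
  then obtain z where z: "FL m z" by blast
  obtain n where "(normal (snd x) \<and> n = dirac (snd x)) \<or> E_step (snd x) n"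
    using E_total by blast
  then have "FL (dirac (snd x)) n" by (intro LT_dirac) auto
  from LT_add[OF LT_scale[OF this, of "fst x"] z]
  have "FL (scale (fst x) (dirac (snd x)) + m) (scale (fst x) n + z)" .
  moreover have "scale (fst x) (dirac (snd x)) + m = add_mset x m" by simp
  ultimately show ?case by metis
qed

lemma FL_pow_ex: "\<exists>w. (FL ^^ n) z w"
proof (induction n)
  case 0
  then show ?case by auto
next
  case (Suc n)
  then obtain w where "(FL ^^ n) z w" by blast
  moreover obtain w' where "FL w w'" using FL_total by blast
  ultimately show ?case by (meson relpowp_Suc_I)
qed

lemma PL_nonneg: "PL m x \<Longrightarrow> nonneg m \<Longrightarrow> nonneg x"
  by (erule LT_nonneg) (auto dest: E_mass)

lemma FL_nonneg: "FL m x \<Longrightarrow> nonneg m \<Longrightarrow> nonneg x"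
  by (erule LT_nonneg) (auto dest: E_mass)

lemma FL_mass: "FL m x \<Longrightarrow> mass x = mass m"
  by (erule LT_mass) (auto dest: E_mass)

lemma PF_local:
  assumes "y = dirac M \<or> E_step M y" "(normal M \<and> x = dirac M) \<or> E_step M x"
  shows "(\<exists>z. FL y z \<and> PL x z) \<and> (\<forall>N. obs_Nnf y N \<le> obs_Nnf x N)"
proof (cases "y = dirac M")
  case yd: True
  show ?thesis
  proof (cases "normal M \<and> x = dirac M")
    case True
    then show ?thesis using yd by (auto intro!: exI[of _ "dirac M"] LT_dirac PL_refl)
  next
    case False
    then have E: "E_step M x" using assms(2) by auto
    have "FL y x" using yd E by (auto intro: LT_dirac)
    moreover have "obs_Nnf y N \<le> obs_Nnf x N" for N
      using yd step_E_normal[OF E] obs_nonneg E_mass[OF E] by (auto simp: obs_dirac)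
    ultimately show ?thesis using PL_refl by blast
  qed
next
  case False
  then have Ey: "E_step M y" using assms(1) by auto
  then have nn: "\<not> normal M" using step_E_normal by blast
  then have Ex: "E_step M x" using assms(2) by auto
  show ?thesis
  proof (cases "x = y")
    case True
    obtain z where "FL y z" using FL_total by blast
    then show ?thesis using True FL_PL by auto
  next
    case False
    from E_diamond[OF Ey Ex] False obtain z where z: "LT E_step y z" "LT E_step x z" by metis
    have "FL y z" "PL x z" using z by (auto elim!: LT_mono)
    moreover have "obs_Nnf y N = 0" "obs_Nnf x N = 0" for N
      using LT_E_nonnormal[OF z(1)] LT_E_nonnormal[OF z(2)] obs_nonnormal by blast+
    ultimately show ?thesis by auto
  qed
qed

lemma sum_image_comp: "(\<Sum>t\<in>#image_mset g Z. f t) = (\<Sum>w\<in>#Z. f (g w))"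
  by (simp add: multiset.map_comp comp_def)

lemma PF:
  assumes nm: "nonneg m" and P: "PL m y" and F: "FL m x"
  shows "(\<exists>z. FL y z \<and> PL x z) \<and> (\<forall>N. obs_Nnf y N \<le> obs_Nnf x N)"
proof -
  let ?pi = "\<lambda>t::real \<times> trm \<times> mdist. (fst t, fst (snd t))"
  obtain T1 where T1: "image_mset ?pi T1 = m" "\<forall>t\<in>#T1. snd (snd t) = dirac (fst (snd t)) \<or> E_step (fst (snd t)) (snd (snd t))"
    "y = (\<Sum>t\<in>#T1. scale (fst t) (snd (snd t)))" using P unfolding LT_def by blast
  obtain T2 where T2: "image_mset ?pi T2 = m" "\<forall>t\<in>#T2. (normal (fst (snd t)) \<and> snd (snd t) = dirac (fst (snd t))) \<or> E_step (fst (snd t)) (snd (snd t))"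
    "x = (\<Sum>t\<in>#T2. scale (fst t) (snd (snd t)))" using F unfolding LT_def by blast
  from mset_match[of ?pi T1 ?pi T2] T1(1) T2(1) obtain C where C: "image_mset fst C = T1" "image_mset snd C = T2"
    "\<forall>c\<in>#C. ?pi (fst c) = ?pi (snd c)" by auto
  have "\<forall>c\<in>#C. \<exists>z. (FL (snd (snd (fst c))) z \<and> PL (snd (snd (snd c))) z) \<and>
      (\<forall>N. obs_Nnf (snd (snd (fst c))) N \<le> obs_Nnf (snd (snd (snd c))) N)"
  proof
    fix c assume c: "c \<in># C"
    then have "fst c \<in># T1" "snd c \<in># T2" using C(1,2) by force+
    then have "snd (snd (fst c)) = dirac (fst (snd (fst c))) \<or> E_step (fst (snd (fst c))) (snd (snd (fst c)))"
      "(normal (fst (snd (fst c))) \<and> snd (snd (snd c)) = dirac (fst (snd (fst c)))) \<or> E_step (fst (snd (fst c))) (snd (snd (snd c)))"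
      using T1(2) T2(2) C(3) c by auto
    from PF_local[OF this] show "\<exists>z. (FL (snd (snd (fst c))) z \<and> PL (snd (snd (snd c))) z) \<and>
      (\<forall>N. obs_Nnf (snd (snd (fst c))) N \<le> obs_Nnf (snd (snd (snd c))) N)" by blast
  qed
  from mset_choice[OF this] obtain Z where Z: "image_mset fst Z = C"
    "\<forall>w\<in>#Z. (FL (snd (snd (fst (fst w)))) (snd w) \<and> PL (snd (snd (snd (fst w)))) (snd w)) \<and>
      (\<forall>N. obs_Nnf (snd (snd (fst (fst w)))) N \<le> obs_Nnf (snd (snd (snd (fst w)))) N)" by blast
  let ?p = "\<lambda>w. fst (fst (fst w))"
  have wt: "fst (snd (fst w)) = ?p w" if "w \<in># Z" for w
    using C(3) Z(1) that by force
  have T1Z: "T1 = image_mset (\<lambda>w. fst (fst w)) Z" using C(1) Z(1) by (auto simp: multiset.map_comp comp_def)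
  have T2Z: "T2 = image_mset (\<lambda>w. snd (fst w)) Z" using C(2) Z(1) by (auto simp: multiset.map_comp comp_def)
  have y': "y = (\<Sum>w\<in>#Z. scale (?p w) (snd (snd (fst (fst w)))))"
    using T1(3) unfolding T1Z sum_image_comp by simp
  have "x = (\<Sum>w\<in>#Z. scale (fst (snd (fst w))) (snd (snd (snd (fst w)))))"
    using T2(3) unfolding T2Z sum_image_comp by simp
  also have "\<dots> = (\<Sum>w\<in>#Z. scale (?p w) (snd (snd (snd (fst w)))))"
    using wt by (intro arg_cong[where f=sum_mset] image_mset_cong) auto
  finally have x': "x = (\<Sum>w\<in>#Z. scale (?p w) (snd (snd (snd (fst w)))))" .
  let ?z = "\<Sum>w\<in>#Z. scale (?p w) (snd w)"
  have "FL y ?z" unfolding y' by (rule LT_sum) (use Z(2) in auto)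
  moreover have "PL x ?z" unfolding x' by (rule LT_sum) (use Z(2) in auto)
  moreover have "obs_Nnf y N \<le> obs_Nnf x N" for N
  proof -
    have pos: "0 \<le> ?p w" if "w \<in># Z" for w
    proof -
      have "fst (fst w) \<in># T1" using that Z(1) C(1) by force
      then have "?pi (fst (fst w)) \<in># m" using T1(1) by force
      then show ?thesis using nm unfolding nonneg_def by auto
    qed
    have "obs_Nnf y N = (\<Sum>w\<in>#Z. ?p w * obs_Nnf (snd (snd (fst (fst w)))) N)"
      unfolding y' obs_sum by simp
    also have "\<dots> \<le> (\<Sum>w\<in>#Z. ?p w * obs_Nnf (snd (snd (snd (fst w)))) N)"
    proof (rule sum_mset_mono)
      fix w assume w: "w \<in># Z"
      then have "obs_Nnf (snd (snd (fst (fst w)))) N \<le> obs_Nnf (snd (snd (snd (fst w)))) N" using Z(2) by blast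
      then show "?p w * obs_Nnf (snd (snd (fst (fst w)))) N \<le> ?p w * obs_Nnf (snd (snd (snd (fst w)))) N"
        using pos[OF w] by (rule mult_left_mono)
    qed
    also have "\<dots> = obs_Nnf x N" unfolding x' obs_sum by simp
    finally show ?thesis .
  qed
  ultimately show ?thesis by blast
qed

lemma thmA: "(PL ^^ k) m y \<Longrightarrow> (FL ^^ k) m x \<Longrightarrow> nonneg m \<Longrightarrow> obs_Nnf y N \<le> obs_Nnf x N"
proof (induction k arbitrary: m y x)
  case 0
  then show ?case by simp
next
  case (Suc k)
  from relpowp_Suc_D2[OF Suc(2)] obtain y1 where y1: "PL m y1" "(PL ^^ k) y1 y" by blast
  from relpowp_Suc_D2[OF Suc(3)] obtain x1 where x1: "FL m x1" "(FL ^^ k) x1 x" by blast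
  from PF[OF Suc(4) y1(1) x1(1)] obtain z where z: "FL y1 z" "PL x1 z"
    and ob: "\<And>N. obs_Nnf y1 N \<le> obs_Nnf x1 N" by blast
  have ny1: "nonneg y1" using PL_nonneg y1(1) Suc(4) by blast
  have nx1: "nonneg x1" using FL_nonneg x1(1) Suc(4) by blast
  show ?case
  proof (cases k)
    case 0
    then show ?thesis using y1 x1 ob by simp
  next
    case (Suc k')
    obtain w where w: "(FL ^^ k') z w" using FL_pow_ex by blast
    have "(FL ^^ k) y1 w" using Suc relpowp_Suc_I2[OF z(1) w] by simp
    from Suc.IH[OF y1(2) this ny1] have 1: "obs_Nnf y N \<le> obs_Nnf w N" .
    have "(PL ^^ k') z w" using relpowp_mono[of FL PL, OF FL_PL w] by blast
    then have "(PL ^^ k) x1 w" using Suc relpowp_Suc_I2[of PL, OF z(2)] by simp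
    from Suc.IH[OF this x1(2) nx1] have 2: "obs_Nnf w N \<le> obs_Nnf x N" .
    show ?thesis using 1 2 by simp
  qed
qed




lemma beta_full_pr: "beta_full M M' \<Longrightarrow> pr M M'"
proof (induction rule: beta_full.induct)
  case (root V M)
  have "pn 1 (App (Lam M) V) (subst M 0 V)"
    by (rule pn.beta[OF pn_refl[of 0] pn_refl[of 0] root]) simp
  then show ?case unfolding pr_def by blast
next
  case (appL M M' N)
  then show ?case using pr_app pr_refl by blast
next
  case (appR N N' M)
  then show ?case using pr_app pr_refl by blast
next
  case (lam M M')
  then show ?case using pr_lam by blast
next
  case (choiceL M M' N)
  then show ?case using pr_choice pr_refl by blast
next
  case (choiceR N N' M)
  then show ?case using pr_choice pr_refl by blast
qed

lemma image_decomp: "image_mset (\<lambda>t. (w t, g t)) T = (\<Sum>t\<in>#T. scale (w t) (dirac (g t)))"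
  by (induction T) auto

lemma PLs_addR: "PL\<^sup>*\<^sup>* a b \<Longrightarrow> PL\<^sup>*\<^sup>* (a + c) (b + c)"
proof (induction rule: rtranclp_induct)
  case base
  then show ?case by simp
next
  case (step y z)
  have "PL (y + c) (z + c)" using LT_add[OF step(2) PL_refl] .
  then show ?case using step(3) by (rule rtranclp.rtrancl_into_rtrancl[rotated])
qed

lemma PLs_addL: "PL\<^sup>*\<^sup>* c d \<Longrightarrow> PL\<^sup>*\<^sup>* (b + c) (b + d)"
proof (induction rule: rtranclp_induct)
  case base
  then show ?case by simp
next
  case (step y z)
  have "PL (b + y) (b + z)" using LT_add[OF PL_refl step(2)] .
  then show ?case using step(3) by (rule rtranclp.rtrancl_into_rtrancl[rotated])
qed

lemma PLs_add: "PL\<^sup>*\<^sup>* a b \<Longrightarrow> PL\<^sup>*\<^sup>* c d \<Longrightarrow> PL\<^sup>*\<^sup>* (a + c) (b + d)"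
  by (rule rtranclp_trans[OF PLs_addR PLs_addL])

lemma PLs_scale: "PL\<^sup>*\<^sup>* a b \<Longrightarrow> PL\<^sup>*\<^sup>* (scale p a) (scale p b)"
proof (induction rule: rtranclp_induct)
  case base
  then show ?case by simp
next
  case (step y z)
  show ?case by (rule rtranclp.rtrancl_into_rtrancl[OF step(3) LT_scale[OF step(2)]])
qed

lemma PLs_sum: "\<forall>i\<in>#X. PL\<^sup>*\<^sup>* (f i) (g i) \<Longrightarrow> PL\<^sup>*\<^sup>* (\<Sum>i\<in>#X. scale (w i) (f i)) (\<Sum>i\<in>#X. scale (w i) (g i))"
  by (rule closed_sum[where R="PL\<^sup>*\<^sup>*"]) (simp, erule (1) PLs_add, erule PLs_scale, assumption)

lemma cpl_refl: "(\<And>a. R a a) \<Longrightarrow> cpl R m m"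
proof -
  assume h: "\<And>a. R a a"
  have "cpl R (\<Sum>x\<in>#m. scale (fst x) (dirac (snd x))) (\<Sum>x\<in>#m. scale (fst x) (dirac (snd x)))"
    by (rule cpl_sum) (auto intro: cpl_dirac h)
  then show ?thesis using decomp[of m] by simp
qed

lemma bw_PL: "beta_weak\<^sup>*\<^sup>* M M1 \<Longrightarrow> PL\<^sup>*\<^sup>* (dirac M) (dirac M1)"
proof (induction rule: rtranclp_induct)
  case base
  then show ?case by simp
next
  case (step y z)
  have "PL (dirac y) (dirac z)" by (rule LT_dirac) (use step(2) in \<open>auto intro: E_sstep bw_sstep\<close>)
  then show ?case using step(3) by (rule rtranclp.rtrancl_into_rtrancl[rotated])
qed

lemma U_PL: "U_step\<^sup>*\<^sup>* M1 M3 \<Longrightarrow> surface_normal M1 \<Longrightarrow> PL\<^sup>*\<^sup>* (dirac M1) (dirac M3) \<and> surface_normal M3"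
proof (induction rule: rtranclp_induct)
  case base
  then show ?case by simp
next
  case (step y z)
  then have sy: "surface_normal y" and r: "PL\<^sup>*\<^sup>* (dirac M1) (dirac y)" by auto
  have "PL (dirac y) (dirac z)" by (rule LT_dirac) (use step(2) sy E_U in auto)
  then show ?case using r sn_U[OF sy step(2)] by (meson rtranclp.rtrancl_into_rtrancl)
qed

lemma post_ox: "oplus_step N n' \<Longrightarrow> ipar M N \<Longrightarrow> \<exists>n. oplus_step M n \<and> cpl pr n n'"
proof (induction arbitrary: M rule: oplus_step.induct)
  case (root A' B')
  from root obtain A B where M: "M = Choice A B" "pr A A'" "pr B B'" by (auto elim: ipar_ChoiceE)
  have "cpl pr (scale (1/2) (dirac A) + scale (1/2) (dirac B)) (scale (1/2) (dirac A') + scale (1/2) (dirac B'))"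
    using M by (intro cpl_add cpl_scale cpl_dirac)
  then have "cpl pr {#(1/2, A), (1/2, B)#} {#(1/2, A'), (1/2, B')#}" by (simp add: add_mset_commute)
  then show ?case using M by (auto intro: oplus_step.root)
next
  case (appL P' m' Q')
  from appL(3) obtain P Q where M: "M = App P Q" "ipar P P'" "ipar Q Q'" by (auto elim: ipar_AppE)
  from appL(2)[OF M(2)] obtain n where n: "oplus_step P n" "cpl pr n m'" by blast
  have "cpl pr (map_trm (\<lambda>x. App x Q) n) (map_trm (\<lambda>x. App x Q') m')"
    using n(2) by (rule cpl_map) (use ipar_pr[OF M(3)] pr_app in blast)
  then show ?case using M n by (auto intro: oplus_step.appL)
next
  case (appR Q' m' P')
  from appR(3) obtain P Q where M: "M = App P Q" "ipar P P'" "ipar Q Q'" by (auto elim: ipar_AppE)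
  from appR(2)[OF M(3)] obtain n where n: "oplus_step Q n" "cpl pr n m'" by blast
  have "cpl pr (map_trm (\<lambda>x. App P x) n) (map_trm (\<lambda>x. App P' x) m')"
    using n(2) by (rule cpl_map) (use ipar_pr[OF M(2)] pr_app in blast)
  then show ?case using M n by (auto intro: oplus_step.appR)
qed

lemma c_E: "pr M M'' \<Longrightarrow> E_step M'' w \<Longrightarrow> \<exists>n. PL\<^sup>*\<^sup>* (dirac M) n \<and> cpl pr n w"
proof -
  assume p: "pr M M''" and E: "E_step M'' w"
  from fact[OF p] obtain M1 where M1: "beta_weak\<^sup>*\<^sup>* M M1" "ipar M1 M''" by blast
  have r1: "PL\<^sup>*\<^sup>* (dirac M) (dirac M1)" using bw_PL[OF M1(1)] .
  show ?thesis
  proof (cases "surface_normal M''")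
    case True
    then obtain M3'' where U: "U_step M'' M3''" "w = dirac M3''" using E unfolding E_step_def by blast
    have sn1: "surface_normal M1" using ipar_sn[OF M1(2) True] .
    from UU[OF U(1) ipar_pr[OF M1(2)]] obtain M3 where M3: "U_step\<^sup>*\<^sup>* M1 M3" "pr M3 M3''" by blast
    have "PL\<^sup>*\<^sup>* (dirac M) (dirac M3)" using r1 U_PL[OF M3(1) sn1] by (meson rtranclp_trans)
    then show ?thesis using M3(2) U(2) cpl_dirac by blast
  next
    case False
    then have s: "surface_step M'' w" using E unfolding E_step_def by blast
    then show ?thesis unfolding surface_step_def
    proof (elim disjE exE conjE)
      fix M3'' assume b: "beta_weak M'' M3''" and w: "w = dirac M3''"
      from post_w[OF b M1(2)] obtain M3 where M3: "beta_weak M1 M3" "pr M3 M3''" by blast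
      have "PL (dirac M1) (dirac M3)" by (rule LT_dirac) (use M3(1) in \<open>auto intro: E_sstep bw_sstep\<close>)
      then have "PL\<^sup>*\<^sup>* (dirac M) (dirac M3)" using r1 by (meson rtranclp.rtrancl_into_rtrancl)
      then show ?thesis using M3(2) w cpl_dirac by blast
    next
      assume o: "oplus_step M'' w"
      from post_ox[OF o M1(2)] obtain n where n: "oplus_step M1 n" "cpl pr n w" by blast
      have "PL (dirac M1) n" by (rule LT_dirac) (use n(1) in \<open>auto intro: E_sstep ox_sstep\<close>)
      then have "PL\<^sup>*\<^sup>* (dirac M) n" using r1 by (meson rtranclp.rtrancl_into_rtrancl)
      then show ?thesis using n(2) by blast
    qed
  qed
qed

lemma c_local: "pr M M'' \<Longrightarrow> w = dirac M'' \<or> E_step M'' w \<Longrightarrow> \<exists>n. PL\<^sup>*\<^sup>* (dirac M) n \<and> cpl pr n w"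
  using c_E cpl_dirac by blast

lemma H_step:
  assumes C1: "cpl pr m' m''" and P: "PL m'' w"
  shows "\<exists>mw. PL\<^sup>*\<^sup>* m' mw \<and> cpl pr mw w"
proof -
  obtain T1 where T1: "image_mset (\<lambda>t. (fst t, fst (snd t))) T1 = m'" "image_mset (\<lambda>t. (fst t, snd (snd t))) T1 = m''"
    "\<forall>t\<in>#T1. pr (fst (snd t)) (snd (snd t))" using C1 unfolding cpl_def by blast
  obtain T2 where T2: "image_mset (\<lambda>t. (fst t, fst (snd t))) T2 = m''"
    "\<forall>t\<in>#T2. snd (snd t) = dirac (fst (snd t)) \<or> E_step (fst (snd t)) (snd (snd t))"
    "w = (\<Sum>t\<in>#T2. scale (fst t) (snd (snd t)))" using P unfolding LT_def by blast
  from mset_match[of "\<lambda>t. (fst t, snd (snd t))" T1 "\<lambda>t. (fst t, fst (snd t))" T2] T1(2) T2(1)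
  obtain C where C: "image_mset fst C = T1" "image_mset snd C = T2"
    "\<forall>c\<in>#C. (fst (fst c), snd (snd (fst c))) = (fst (snd c), fst (snd (snd c)))" by auto
  have "\<forall>c\<in>#C. \<exists>n. PL\<^sup>*\<^sup>* (dirac (fst (snd (fst c)))) n \<and> cpl pr n (snd (snd (snd c)))"
  proof
    fix c assume c: "c \<in># C"
    then have "fst c \<in># T1" "snd c \<in># T2" using C(1,2) by force+
    then have "pr (fst (snd (fst c))) (snd (snd (fst c)))"
      "snd (snd (snd c)) = dirac (snd (snd (fst c))) \<or> E_step (snd (snd (fst c))) (snd (snd (snd c)))"
      using T1(3) T2(2) C(3) c by auto
    from c_local[OF this] show "\<exists>n. PL\<^sup>*\<^sup>* (dirac (fst (snd (fst c)))) n \<and> cpl pr n (snd (snd (snd c)))" .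
  qed
  from mset_choice[OF this] obtain Z where Z: "image_mset fst Z = C"
    "\<forall>v\<in>#Z. PL\<^sup>*\<^sup>* (dirac (fst (snd (fst (fst v))))) (snd v) \<and> cpl pr (snd v) (snd (snd (snd (fst v))))" by blast
  let ?p = "\<lambda>v. fst (fst (fst v))"
  have T1Z: "T1 = image_mset (\<lambda>v. fst (fst v)) Z" using C(1) Z(1) by (auto simp: multiset.map_comp comp_def)
  have T2Z: "T2 = image_mset (\<lambda>v. snd (fst v)) Z" using C(2) Z(1) by (auto simp: multiset.map_comp comp_def)
  have wt: "fst (snd (fst v)) = ?p v" if "v \<in># Z" for v
    using C(3) Z(1) that by force
  have m': "m' = (\<Sum>v\<in>#Z. scale (?p v) (dirac (fst (snd (fst (fst v))))))"
    using T1(1) unfolding image_decomp T1Z sum_image_comp by simp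
  have "w = (\<Sum>v\<in>#Z. scale (fst (snd (fst v))) (snd (snd (snd (fst v)))))"
    using T2(3) unfolding T2Z sum_image_comp by simp
  also have "\<dots> = (\<Sum>v\<in>#Z. scale (?p v) (snd (snd (snd (fst v)))))"
    using wt by (intro arg_cong[where f=sum_mset] image_mset_cong) auto
  finally have w': "w = (\<Sum>v\<in>#Z. scale (?p v) (snd (snd (snd (fst v)))))" .
  let ?mw = "\<Sum>v\<in>#Z. scale (?p v) (snd v)"
  have "PL\<^sup>*\<^sup>* m' ?mw" unfolding m' by (rule PLs_sum) (use Z(2) in auto)
  moreover have "cpl pr ?mw w" unfolding w' by (rule cpl_sum) (use Z(2) in auto)
  ultimately show ?thesis by blast
qed

lemma normal_bnormal: "normal M \<Longrightarrow> bnormal M"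
  unfolding normal_def bnormal_def step_def by blast

lemma normal_sn: "normal M \<Longrightarrow> surface_normal M"
  unfolding normal_def surface_normal_def step_def surface_step_def using bw_full by blast

lemma norm_PL: "pr M N \<Longrightarrow> normal N \<Longrightarrow> PL\<^sup>*\<^sup>* (dirac M) (dirac N)"
proof -
  assume p: "pr M N" and n: "normal N"
  from norm[OF normal_bnormal[OF n] p] obtain M1 where M1: "beta_weak\<^sup>*\<^sup>* M M1" "ipar M1 N" "U_step\<^sup>*\<^sup>* M1 N" by blast
  have "surface_normal M1" using ipar_sn[OF M1(2) normal_sn[OF n]] .
  then show ?thesis using bw_PL[OF M1(1)] U_PL[OF M1(3)] by (meson rtranclp_trans)
qed

lemma H0:
  assumes "cpl pr m' m''"
  shows "\<exists>z. PL\<^sup>*\<^sup>* m' z \<and> (\<forall>N. obs_Nnf m'' N = obs_Nnf z N)"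
proof -
  obtain T where T: "image_mset (\<lambda>t. (fst t, fst (snd t))) T = m'" "image_mset (\<lambda>t. (fst t, snd (snd t))) T = m''"
    "\<forall>t\<in>#T. pr (fst (snd t)) (snd (snd t))" using assms unfolding cpl_def by blast
  define zt where "zt t = (if normal (snd (snd t)) then dirac (snd (snd t)) else dirac (fst (snd t)))" for t :: "real \<times> trm \<times> trm"
  have m': "m' = (\<Sum>t\<in>#T. scale (fst t) (dirac (fst (snd t))))" using T(1) image_decomp by metis
  have m'': "m'' = (\<Sum>t\<in>#T. scale (fst t) (dirac (snd (snd t))))" using T(2) image_decomp by metis
  let ?z = "\<Sum>t\<in>#T. scale (fst t) (zt t)"
  have "PL\<^sup>*\<^sup>* m' ?z" unfolding m'
  proof (rule PLs_sum, rule ballI)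
    fix t assume "t \<in># T"
    then show "PL\<^sup>*\<^sup>* (dirac (fst (snd t))) (zt t)" using T(3) norm_PL unfolding zt_def by auto
  qed
  moreover have "obs_Nnf m'' N = obs_Nnf ?z N" for N
  proof -
    have e: "obs_Nnf (dirac (snd (snd t))) N = obs_Nnf (zt t) N" if "t \<in># T" for t
    proof (cases "normal (snd (snd t))")
      case True
      then show ?thesis unfolding zt_def by simp
    next
      case False
      have "\<not> normal (fst (snd t))"
      proof
        assume "normal (fst (snd t))"
        then have "snd (snd t) = fst (snd t)" using pr_bnormal_id normal_bnormal T(3) that by blast
        then show False using False \<open>normal (fst (snd t))\<close> by simp
      qed
      then show ?thesis using False unfolding zt_def by (auto simp: obs_dirac)
    qed
    show ?thesis unfolding m'' obs_sum obs_scale using e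
      by (intro arg_cong[where f=sum_mset] image_mset_cong) auto
  qed
  ultimately show ?thesis by blast
qed

lemma H: "PL\<^sup>*\<^sup>* m'' z'' \<Longrightarrow> cpl pr m' m'' \<Longrightarrow> \<exists>z. PL\<^sup>*\<^sup>* m' z \<and> (\<forall>N. obs_Nnf z'' N = obs_Nnf z N)"
proof (induction arbitrary: m' rule: converse_rtranclp_induct)
  case base
  then show ?case using H0 by blast
next
  case (step y w)
  from H_step[OF step(4) step(1)] obtain mw where mw: "PL\<^sup>*\<^sup>* m' mw" "cpl pr mw w" by blast
  from step(3)[OF mw(2)] obtain z where "PL\<^sup>*\<^sup>* mw z" "\<forall>N. obs_Nnf z'' N = obs_Nnf z N" by blast
  then show ?case using mw(1) by (meson rtranclp_trans)
qed

lemma G1: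
  assumes "LT (\<lambda>M n. (\<exists>M'. n = dirac M' \<and> pr M M') \<or> E_step M n) m m1"
  shows "\<exists>mE. PL m mE \<and> cpl pr mE m1"
proof -
  obtain T where T: "image_mset (\<lambda>t. (fst t, fst (snd t))) T = m"
    "\<forall>t\<in>#T. (\<exists>M'. snd (snd t) = dirac M' \<and> pr (fst (snd t)) M') \<or> E_step (fst (snd t)) (snd (snd t))"
    "m1 = (\<Sum>t\<in>#T. scale (fst t) (snd (snd t)))" using assms unfolding LT_def by blast
  have "\<forall>t\<in>#T. \<exists>y. (y = dirac (fst (snd t)) \<or> E_step (fst (snd t)) y) \<and> cpl pr y (snd (snd t))"
  proof
    fix t assume "t \<in># T"
    then have "(\<exists>M'. snd (snd t) = dirac M' \<and> pr (fst (snd t)) M') \<or> E_step (fst (snd t)) (snd (snd t))"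
      using T(2) by blast
    then show "\<exists>y. (y = dirac (fst (snd t)) \<or> E_step (fst (snd t)) y) \<and> cpl pr y (snd (snd t))"
    proof (elim disjE exE conjE)
      fix M' assume "snd (snd t) = dirac M'" "pr (fst (snd t)) M'"
      then show ?thesis using cpl_dirac[of pr "fst (snd t)" M'] by auto
    next
      assume "E_step (fst (snd t)) (snd (snd t))"
      then show ?thesis using cpl_refl[of pr, OF pr_refl] by blast
    qed
  qed
  from mset_choice[OF this] obtain Z where Z: "image_mset fst Z = T"
    "\<forall>v\<in>#Z. (snd v = dirac (fst (snd (fst v))) \<or> E_step (fst (snd (fst v))) (snd v)) \<and> cpl pr (snd v) (snd (snd (fst v)))"
    by blast
  have m: "m = (\<Sum>v\<in>#Z. scale (fst (fst v)) (dirac (fst (snd (fst v)))))"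
    using T(1) unfolding image_decomp Z(1)[symmetric] sum_image_comp by simp
  have m1: "m1 = (\<Sum>v\<in>#Z. scale (fst (fst v)) (snd (snd (fst v))))"
    using T(3) unfolding Z(1)[symmetric] sum_image_comp by simp
  let ?mE = "\<Sum>v\<in>#Z. scale (fst (fst v)) (snd v)"
  have "PL m ?mE" unfolding m
  proof (rule LT_sum, rule ballI)
    fix v assume "v \<in># Z"
    then have "snd v = dirac (fst (snd (fst v))) \<or> E_step (fst (snd (fst v))) (snd v)" using Z(2) by blast
    then show "PL (dirac (fst (snd (fst v)))) (snd v)" by (rule LT_dirac)
  qed
  moreover have "cpl pr ?mE m1" unfolding m1 by (rule cpl_sum) (use Z(2) in auto)
  ultimately show ?thesis by blast
qed

lemma G0: "lift step m m1 \<Longrightarrow> LT (\<lambda>M n. (\<exists>M'. n = dirac M' \<and> pr M M') \<or> E_step M n) m m1"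
  unfolding lift_LT
proof (erule LT_mono)
  fix M n assume "n = dirac M \<or> step M n"
  then show "(\<exists>M'. n = dirac M' \<and> pr M M') \<or> E_step M n"
    unfolding step_def using pr_refl beta_full_pr E_sstep ox_sstep by blast
qed

lemma G: "lift step m m1 \<Longrightarrow> PL\<^sup>*\<^sup>* m1 z1 \<Longrightarrow> \<exists>z. PL\<^sup>*\<^sup>* m z \<and> (\<forall>N. obs_Nnf z1 N = obs_Nnf z N)"
proof -
  assume a: "lift step m m1" "PL\<^sup>*\<^sup>* m1 z1"
  from G1[OF G0[OF a(1)]] obtain mE where mE: "PL m mE" "cpl pr mE m1" by blast
  from H[OF a(2) mE(2)] obtain z where "PL\<^sup>*\<^sup>* mE z" "\<forall>N. obs_Nnf z1 N = obs_Nnf z N" by blast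
  then show ?thesis using mE(1) by (meson converse_rtranclp_into_rtranclp)
qed

lemma lift_step_refl: "lift step m m"
  unfolding lift_LT by (rule LT_refl) simp

lemma F:
  assumes "maximal_seq (lift step) m ms"
  shows "PL\<^sup>*\<^sup>* (ms n) z1 \<Longrightarrow> \<exists>z. PL\<^sup>*\<^sup>* m z \<and> (\<forall>N. obs_Nnf z1 N = obs_Nnf z N)"
proof (induction n arbitrary: z1)
  case 0
  then show ?case using assms unfolding maximal_seq_def by auto
next
  case (Suc n)
  have "lift step (ms n) (ms (Suc n))"
    using assms lift_step_refl unfolding maximal_seq_def by metis
  from G[OF this Suc(2)] obtain z' where z': "PL\<^sup>*\<^sup>* (ms n) z'" "\<forall>N. obs_Nnf z1 N = obs_Nnf z' N" by blast
  from Suc(1)[OF z'(1)] obtain z where "PL\<^sup>*\<^sup>* m z" "\<forall>N. obs_Nnf z' N = obs_Nnf z N" by blast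
  then show ?case using z'(2) by auto
qed




theorem mainTheorem9:
  fixes m :: mdist and r :: "trm \<Rightarrow> real"
  assumes "is_mdist m"
    and "obs_rel (lift step) m r"
  shows "\<exists>s. obs_rel (full_lift E_step) m s \<and> r \<le> s"
proof -
  from assms(2) obtain ms' where ms': "maximal_seq (lift step) m ms'"
    and r: "r = (\<lambda>N. SUP n. obs_Nnf (ms' n) N)" unfolding obs_rel_def by blast
  define ms where "ms = rec_nat m (\<lambda>_ x. SOME z. FL x z)"
  have ms0: "ms 0 = m" unfolding ms_def by simp
  have msS: "ms (Suc n) = (SOME z. FL (ms n) z)" for n unfolding ms_def by simp
  have stp: "FL (ms n) (ms (Suc n))" for n unfolding msS using FL_total by (rule someI_ex)
  have maxs: "maximal_seq (full_lift E_step) m ms"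
    unfolding maximal_seq_def full_lift_LT using ms0 stp by blast
  define s where "s = (\<lambda>N. SUP n. obs_Nnf (ms n) N)"
  have obs: "obs_rel (full_lift E_step) m s" unfolding obs_rel_def s_def using maxs by blast
  have nm: "nonneg m" using assms(1) unfolding is_mdist_def nonneg_def by auto
  have pow: "(FL ^^ n) m (ms n)" for n
  proof (induction n)
    case 0
    then show ?case by (simp add: ms0)
  next
    case (Suc n)
    show ?case using relpowp_Suc_I[OF Suc stp[of n]] .
  qed
  have nonn: "nonneg (ms n)" for n
  proof (induction n)
    case 0
    then show ?case using nm ms0 by simp
  next
    case (Suc n)
    show ?case using FL_nonneg[OF stp[of n] Suc] .
  qed
  have massn: "mass (ms n) = mass m" for n
  proof (induction n)
    case 0
    then show ?case using ms0 by simp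
  next
    case (Suc n)
    show ?case using FL_mass[OF stp[of n]] Suc by simp
  qed
  have bdd: "bdd_above (range (\<lambda>n. obs_Nnf (ms n) N))" for N
  proof (rule bdd_aboveI2)
    fix n show "obs_Nnf (ms n) N \<le> mass m" using obs_le_mass[OF nonn[of n]] massn[of n] by simp
  qed
  have "r \<le> s"
  proof (rule le_funI)
    fix N
    show "r N \<le> s N" unfolding r s_def
    proof (rule cSUP_least)
      show "UNIV \<noteq> {}" by simp
    next
      fix n
      obtain z where z: "PL\<^sup>*\<^sup>* m z" "\<forall>N. obs_Nnf (ms' n) N = obs_Nnf z N"
        using F[OF ms' rtranclp.rtrancl_refl] by blast
      from z(1) obtain j where j: "(PL ^^ j) m z" unfolding rtranclp_power by blast
      have "obs_Nnf z N \<le> obs_Nnf (ms j) N" using thmA[OF j pow nm] .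
      also have "\<dots> \<le> (SUP n. obs_Nnf (ms n) N)" by (rule cSUP_upper[OF _ bdd]) simp
      finally show "obs_Nnf (ms' n) N \<le> (SUP n. obs_Nnf (ms n) N)" using z(2) by simp
    qed
  qed
  then show ?thesis using obs by blast
qed


end
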